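(* Let $R$ be a ring, let $X$ be an $R^\circ$-complex (complex of right $R$-modules) and let $Y$ be a bounded above $R$-complex with $\sup Y=k\in\mathbb{Z}$. Then there are isomorphisms of $\mathbb{Z}$-complexes $$X\,\bar{\otimes}_R\,Y\;\cong\;{\lim}_{i\in\mathbb{N}}\big((X\otimes_RY)/(X\otimes_RY_{\le k-i})\big)$$ and $$X\,\check{\otimes}_R\,Y\;\cong\;{\lim}^1_{i\in\mathbb{N}}\big(X\otimes_RY_{\le k-i}\big),$$ where the inverse systems have as transition maps the canonical surjections, respectively the inclusions, induced by the filtration $Y=Y_{\le k}\supseteq Y_{\le k-1}\supseteq Y_{\le k-2}\supseteq\cdots$.
   Context: For an $R$-complex $Y$, $\sup Y=\sup\{i\in\mathbb{Z}: Y_i\neq0\}$, and $Y_{\le m}$ denotes the subcomplex of $Y$ with $(Y_{\le m})_i=Y_i$ for $i\le m$ and $0$ for $i>m$ (with the restricted differential). For an $R^\circ$-complex $X$ and an $R$-complex $Y$: the tensor product $X\otimes_RY$ has degree-$n$ term $\coprod_{i\in\mathbb{Z}}X_i\otimes_RY_{n-i}$ and differential $\partial(x\otimes y)=\partial^X(x)\otimes y+(-1)^{|x|}x\otimes\partial^Y(y)$; the unbounded tensor product $X\bar\otimes_RY$ has degree-$n$ term $\prod_{i\in\mathbb{Z}}X_i\otimes_RY_{n-i}$ with the same differential formula; $X\otimes_RY$ is a subcomplex of $X\bar\otimes_RY$, and the stable tensor product is the quotient complex $X\check\otimes_RY=(X\bar\otimes_RY)/(X\otimes_RY)$. For an $\mathbb{N}$-inverse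 system $\{\nu^{uv}:X^v\to X^u\}_{u\le v}$ of complexes, $\lim_iX^i$ and $\lim^1_iX^i$ are the kernel and cokernel of $1-\nu:\prod_iX^i\to\prod_iX^i$, $(x_i)_i\mapsto(x_i-\nu^{i,i+1}(x_{i+1}))_i$. *)

theory Defs
  imports "HOL-Algebra.Free_Abelian_Groups" "HOL-Algebra.Module"
begin

text \<open>The opposite ring; right R-modules are left modules over it.\<close>
definition opp_ring :: "'r ring \<Rightarrow> 'r ring" where
  "opp_ring R = R\<lparr>mult := (\<lambda>a b. b \<otimes>\<^bsub>R\<^esub> a)\<rparr>"

text \<open>Left modules over an arbitrary ring (HOL-Algebra's module locale needs a commutative ring).\<close>
definition lmodule :: "'r ring \<Rightarrow> ('r, 'a) module \<Rightarrow> bool" where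
  "lmodule R M \<longleftrightarrow> ring R \<and> abelian_group M \<and>
     (\<forall>a \<in> carrier R. \<forall>x \<in> carrier M. a \<odot>\<^bsub>M\<^esub> x \<in> carrier M) \<and>
     (\<forall>a \<in> carrier R. \<forall>b \<in> carrier R. \<forall>x \<in> carrier M.
        (a \<oplus>\<^bsub>R\<^esub> b) \<odot>\<^bsub>M\<^esub> x = a \<odot>\<^bsub>M\<^esub> x \<oplus>\<^bsub>M\<^esub> b \<odot>\<^bsub>M\<^esub> x) \<and>
     (\<forall>a \<in> carrier R. \<forall>x \<in> carrier M. \<forall>y \<in> carrier M.
        a \<odot>\<^bsub>M\<^esub> (x \<oplus>\<^bsub>M\<^esub> y) = a \<odot>\<^bsub>M\<^esub> x \<oplus>\<^bsub>M\<^esub> a \<odot>\<^bsub>M\<^esub> y) \<and>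
     (\<forall>a \<in> carrier R. \<forall>b \<in> carrier R. \<forall>x \<in> carrier M.
        (a \<otimes>\<^bsub>R\<^esub> b) \<odot>\<^bsub>M\<^esub> x = a \<odot>\<^bsub>M\<^esub> (b \<odot>\<^bsub>M\<^esub> x)) \<and>
     (\<forall>x \<in> carrier M. \<one>\<^bsub>R\<^esub> \<odot>\<^bsub>M\<^esub> x = x)"

definition lmod_hom :: "'r ring \<Rightarrow> ('r, 'a) module \<Rightarrow> ('r, 'a) module \<Rightarrow> ('a \<Rightarrow> 'a) set" where
  "lmod_hom R M N = {f. (\<forall>x \<in> carrier M. f x \<in> carrier N) \<and>
     (\<forall>x \<in> carrier M. \<forall>y \<in> carrier M. f (x \<oplus>\<^bsub>M\<^esub> y) = f x \<oplus>\<^bsub>N\<^esub> f y) \<and>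
     (\<forall>a \<in> carrier R. \<forall>x \<in> carrier M. f (a \<odot>\<^bsub>M\<^esub> x) = a \<odot>\<^bsub>N\<^esub> f x)}"

definition is_complex :: "'r ring \<Rightarrow> (int \<Rightarrow> ('r, 'a) module) \<Rightarrow> (int \<Rightarrow> 'a \<Rightarrow> 'a) \<Rightarrow> bool" where
  "is_complex R M d \<longleftrightarrow> (\<forall>n. lmodule R (M n)) \<and> (\<forall>n. d n \<in> lmod_hom R (M n) (M (n - 1))) \<and>
     (\<forall>n. \<forall>x \<in> carrier (M n). d (n - 1) (d n x) = \<zero>\<^bsub>M (n - 2)\<^esub>)"

definition nonzero_degrees :: "(int \<Rightarrow> ('r, 'a) module) \<Rightarrow> int set" where
  "nonzero_degrees M = {i. carrier (M i) \<noteq> {\<zero>\<^bsub>M i\<^esub>}}"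

definition bdd_above_with_sup :: "(int \<Rightarrow> ('r, 'a) module) \<Rightarrow> int \<Rightarrow> bool" where
  "bdd_above_with_sup M k \<longleftrightarrow> nonzero_degrees M \<noteq> {} \<and> bdd_above (nonzero_degrees M)
      \<and> Sup (nonzero_degrees M) = k"

text \<open>The truncation \<open>Y_{\<le>m}\<close> (same differential, restricted).\<close>
definition trunc :: "(int \<Rightarrow> ('r, 'a) module) \<Rightarrow> int \<Rightarrow> int \<Rightarrow> ('r, 'a) module" where
  "trunc M m i = (if i \<le> m then M i else (M i)\<lparr>carrier := {\<zero>\<^bsub>M i\<^esub>}\<rparr>)"

text \<open>\<open>A\<close> is a left module over the opposite ring, i.e. a right R-module with \<open>a\<cdot>r = r \<odot>\<^bsub>A\<^esub> a\<close>.
  \<open>A \<otimes>\<^sub>R B\<close> is the free abelian group on \<open>A \<times> B\<close> modulo the bilinearity/balancing relations.\<close>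
definition tensor_rels :: "'r ring \<Rightarrow> ('r, 'a) module \<Rightarrow> ('r, 'b) module \<Rightarrow> ('a \<times> 'b \<Rightarrow>\<^sub>0 int) set" where
  "tensor_rels R A B =
     {frag_of (a \<oplus>\<^bsub>A\<^esub> a', b) - frag_of (a, b) - frag_of (a', b) | a a' b.
        a \<in> carrier A \<and> a' \<in> carrier A \<and> b \<in> carrier B}
   \<union> {frag_of (a, b \<oplus>\<^bsub>B\<^esub> b') - frag_of (a, b) - frag_of (a, b') | a b b'.
        a \<in> carrier A \<and> b \<in> carrier B \<and> b' \<in> carrier B}
   \<union> {frag_of (r \<odot>\<^bsub>A\<^esub> a, b) - frag_of (a, r \<odot>\<^bsub>B\<^esub> b) | r a b.
        r \<in> carrier R \<and> a \<in> carrier A \<and> b \<in> carrier B}"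

definition tensor_subgroup :: "'r ring \<Rightarrow> ('r, 'a) module \<Rightarrow> ('r, 'b) module \<Rightarrow> ('a \<times> 'b \<Rightarrow>\<^sub>0 int) set" where
  "tensor_subgroup R A B = generate (free_Abelian_group (carrier A \<times> carrier B)) (tensor_rels R A B)"

definition tensor_mod :: "'r ring \<Rightarrow> ('r, 'a) module \<Rightarrow> ('r, 'b) module \<Rightarrow> ('a \<times> 'b \<Rightarrow>\<^sub>0 int) set monoid" where
  "tensor_mod R A B = free_Abelian_group (carrier A \<times> carrier B) Mod tensor_subgroup R A B"

definition tensor_map :: "'r ring \<Rightarrow> ('r, 'a) module \<Rightarrow> ('r, 'b) module \<Rightarrow> ('a \<Rightarrow> 'a) \<Rightarrow> ('b \<Rightarrow> 'b)
     \<Rightarrow> ('a \<times> 'b \<Rightarrow>\<^sub>0 int) set \<Rightarrow> ('a \<times> 'b \<Rightarrow>\<^sub>0 int) set" where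
  "tensor_map R A' B' f g C =
     tensor_subgroup R A' B' #>\<^bsub>free_Abelian_group (carrier A' \<times> carrier B')\<^esub>
       frag_extend (\<lambda>(a, b). frag_of (f a, g b)) (SOME c. c \<in> C)"

type_synonym ('a, 'b) tens = "('a \<times> 'b \<Rightarrow>\<^sub>0 int) set"

definition tcomp :: "'r ring \<Rightarrow> (int \<Rightarrow> ('r, 'a) module) \<Rightarrow> (int \<Rightarrow> ('r, 'b) module) \<Rightarrow> int \<Rightarrow> int
     \<Rightarrow> ('a, 'b) tens monoid" where
  "tcomp R X Y n i = tensor_mod R (X i) (Y (n - i))"

text \<open>Degree-\<open>n\<close> term of the unbounded tensor product: \<open>\<Prod>\<^sub>i X_i \<otimes> Y_{n-i}\<close>.\<close>
definition tprod :: "'r ring \<Rightarrow> (int \<Rightarrow> ('r, 'a) module) \<Rightarrow> (int \<Rightarrow> ('r, 'b) module) \<Rightarrow> int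
     \<Rightarrow> (int \<Rightarrow> ('a, 'b) tens) monoid" where
  "tprod R X Y n = \<lparr>carrier = {f. \<forall>i. f i \<in> carrier (tcomp R X Y n i)},
     mult = (\<lambda>f g i. f i \<otimes>\<^bsub>tcomp R X Y n i\<^esub> g i), one = (\<lambda>i. \<one>\<^bsub>tcomp R X Y n i\<^esub>)\<rparr>"

text \<open>Degree-\<open>n\<close> term of the tensor product: \<open>\<Coprod>\<^sub>i X_i \<otimes> Y_{n-i}\<close> (finitely supported families).\<close>
definition tsum_carrier :: "'r ring \<Rightarrow> (int \<Rightarrow> ('r, 'a) module) \<Rightarrow> (int \<Rightarrow> ('r, 'b) module) \<Rightarrow> int
     \<Rightarrow> (int \<Rightarrow> ('a, 'b) tens) set" where
  "tsum_carrier R X Y n = {f \<in> carrier (tprod R X Y n). finite {i. f i \<noteq> \<one>\<^bsub>tcomp R X Y n i\<^esub>}}"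

definition tsum :: "'r ring \<Rightarrow> (int \<Rightarrow> ('r, 'a) module) \<Rightarrow> (int \<Rightarrow> ('r, 'b) module) \<Rightarrow> int
     \<Rightarrow> (int \<Rightarrow> ('a, 'b) tens) monoid" where
  "tsum R X Y n = (tprod R X Y n)\<lparr>carrier := tsum_carrier R X Y n\<rparr>"

text \<open>\<open>\<partial>(x \<otimes> y) = \<partial>x \<otimes> y + (-1)^{|x|} x \<otimes> \<partial>y\<close>, componentwise.\<close>
definition tdiff :: "'r ring \<Rightarrow> (int \<Rightarrow> ('r, 'a) module) \<Rightarrow> (int \<Rightarrow> 'a \<Rightarrow> 'a)
     \<Rightarrow> (int \<Rightarrow> ('r, 'b) module) \<Rightarrow> (int \<Rightarrow> 'b \<Rightarrow> 'b) \<Rightarrow> int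
     \<Rightarrow> (int \<Rightarrow> ('a, 'b) tens) \<Rightarrow> (int \<Rightarrow> ('a, 'b) tens)" where
  "tdiff R X dX Y dY n f = (\<lambda>i.
     (let G = tcomp R X Y (n - 1) i;
          u = tensor_map R (X i) (Y (n - 1 - i)) (dX (i + 1)) (\<lambda>y. y) (f (i + 1));
          v = tensor_map R (X i) (Y (n - 1 - i)) (\<lambda>x. x) (dY (n - i)) (f i)
      in u \<otimes>\<^bsub>G\<^esub> (if even i then v else inv\<^bsub>G\<^esub> v)))"

text \<open>The chain map \<open>X \<otimes> Y_{\<le>m} \<rightarrow> X \<otimes> Y\<close> (resp. \<open>X \<otimes> Y_{\<le>m} \<rightarrow> X \<otimes> Y_{\<le>m'}\<close>, \<open>m \<le> m'\<close>)
  induced by the inclusion of the truncation.\<close>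
definition tincl :: "'r ring \<Rightarrow> (int \<Rightarrow> ('r, 'a) module) \<Rightarrow> (int \<Rightarrow> ('r, 'b) module) \<Rightarrow> int
     \<Rightarrow> (int \<Rightarrow> ('a, 'b) tens) \<Rightarrow> (int \<Rightarrow> ('a, 'b) tens)" where
  "tincl R X Y' n f = (\<lambda>i. tensor_map R (X i) (Y' (n - i)) (\<lambda>x. x) (\<lambda>y. y) (f i))"

text \<open>\<open>X \<otimes> Y_{\<le>m}\<close> regarded as a subcomplex of \<open>X \<otimes> Y\<close>: the image of the canonical map.\<close>
definition tsub :: "'r ring \<Rightarrow> (int \<Rightarrow> ('r, 'a) module) \<Rightarrow> (int \<Rightarrow> ('r, 'b) module) \<Rightarrow> int \<Rightarrow> int
     \<Rightarrow> (int \<Rightarrow> ('a, 'b) tens) set" where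
  "tsub R X Y m n = tincl R X Y n ` tsum_carrier R X (trunc Y m) n"

definition quot_grp :: "(int \<Rightarrow> ('e, 'x) monoid_scheme) \<Rightarrow> (int \<Rightarrow> 'e set) \<Rightarrow> int \<Rightarrow> 'e set monoid" where
  "quot_grp G H n = G n Mod H n"

definition quot_diff :: "(int \<Rightarrow> ('e, 'x) monoid_scheme) \<Rightarrow> (int \<Rightarrow> 'e \<Rightarrow> 'e) \<Rightarrow> (int \<Rightarrow> 'e set)
     \<Rightarrow> int \<Rightarrow> 'e set \<Rightarrow> 'e set" where
  "quot_diff G d H n S = H (n - 1) #>\<^bsub>G (n - 1)\<^esub> d n (SOME x. x \<in> S)"

definition cx_iso :: "(int \<Rightarrow> ('e, 'x) monoid_scheme) \<Rightarrow> (int \<Rightarrow> 'e \<Rightarrow> 'e)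
     \<Rightarrow> (int \<Rightarrow> ('f, 'y) monoid_scheme) \<Rightarrow> (int \<Rightarrow> 'f \<Rightarrow> 'f) \<Rightarrow> bool" where
  "cx_iso G d G' d' \<longleftrightarrow> (\<exists>\<phi>. \<forall>n. \<phi> n \<in> iso (G n) (G' n) \<and>
     (\<forall>x \<in> carrier (G n). \<phi> (n - 1) (d n x) = d' n (\<phi> n x)))"

text \<open>System: complexes \<open>(C u, dC u)\<close> for \<open>u \<in> \<nat>\<close>, with \<open>\<nu> u n = \<nu>^{u,u+1} : C (u+1) n \<rightarrow> C u n\<close>.\<close>
definition sys_prod :: "(nat \<Rightarrow> int \<Rightarrow> ('e, 'x) monoid_scheme) \<Rightarrow> int \<Rightarrow> (nat \<Rightarrow> 'e) monoid" where
  "sys_prod C n = \<lparr>carrier = {x. \<forall>u. x u \<in> carrier (C u n)},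
     mult = (\<lambda>x y u. x u \<otimes>\<^bsub>C u n\<^esub> y u), one = (\<lambda>u. \<one>\<^bsub>C u n\<^esub>)\<rparr>"

definition sys_prod_diff :: "(nat \<Rightarrow> int \<Rightarrow> 'e \<Rightarrow> 'e) \<Rightarrow> int \<Rightarrow> (nat \<Rightarrow> 'e) \<Rightarrow> (nat \<Rightarrow> 'e)" where
  "sys_prod_diff dC n x = (\<lambda>u. dC u n (x u))"

definition one_minus_nu :: "(nat \<Rightarrow> int \<Rightarrow> ('e, 'x) monoid_scheme) \<Rightarrow> (nat \<Rightarrow> int \<Rightarrow> 'e \<Rightarrow> 'e)
     \<Rightarrow> int \<Rightarrow> (nat \<Rightarrow> 'e) \<Rightarrow> (nat \<Rightarrow> 'e)" where
  "one_minus_nu C \<nu> n x = (\<lambda>u. x u \<otimes>\<^bsub>C u n\<^esub> inv\<^bsub>C u n\<^esub> (\<nu> u n (x (Suc u))))"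

definition lim_grp :: "(nat \<Rightarrow> int \<Rightarrow> ('e, 'x) monoid_scheme) \<Rightarrow> (nat \<Rightarrow> int \<Rightarrow> 'e \<Rightarrow> 'e)
     \<Rightarrow> int \<Rightarrow> (nat \<Rightarrow> 'e) monoid" where
  "lim_grp C \<nu> n = (sys_prod C n)\<lparr>carrier :=
     {x \<in> carrier (sys_prod C n). one_minus_nu C \<nu> n x = \<one>\<^bsub>sys_prod C n\<^esub>}\<rparr>"

definition lim1_grp :: "(nat \<Rightarrow> int \<Rightarrow> ('e, 'x) monoid_scheme) \<Rightarrow> (nat \<Rightarrow> int \<Rightarrow> 'e \<Rightarrow> 'e)
     \<Rightarrow> int \<Rightarrow> (nat \<Rightarrow> 'e) set monoid" where
  "lim1_grp C \<nu> = quot_grp (sys_prod C) (\<lambda>n. one_minus_nu C \<nu> n ` carrier (sys_prod C n))"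

definition lim1_diff :: "(nat \<Rightarrow> int \<Rightarrow> ('e, 'x) monoid_scheme) \<Rightarrow> (nat \<Rightarrow> int \<Rightarrow> 'e \<Rightarrow> 'e)
     \<Rightarrow> (nat \<Rightarrow> int \<Rightarrow> 'e \<Rightarrow> 'e) \<Rightarrow> int \<Rightarrow> (nat \<Rightarrow> 'e) set \<Rightarrow> (nat \<Rightarrow> 'e) set" where
  "lim1_diff C \<nu> dC = quot_diff (sys_prod C) (sys_prod_diff dC)
     (\<lambda>n. one_minus_nu C \<nu> n ` carrier (sys_prod C n))"

definition qsys :: "'r ring \<Rightarrow> (int \<Rightarrow> ('r, 'a) module) \<Rightarrow> (int \<Rightarrow> ('r, 'b) module) \<Rightarrow> int
     \<Rightarrow> nat \<Rightarrow> int \<Rightarrow> (int \<Rightarrow> ('a, 'b) tens) set monoid" where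
  "qsys R X Y k u = quot_grp (tsum R X Y) (tsub R X Y (k - int u))"

definition qsys_diff :: "'r ring \<Rightarrow> (int \<Rightarrow> ('r, 'a) module) \<Rightarrow> (int \<Rightarrow> 'a \<Rightarrow> 'a)
     \<Rightarrow> (int \<Rightarrow> ('r, 'b) module) \<Rightarrow> (int \<Rightarrow> 'b \<Rightarrow> 'b) \<Rightarrow> int
     \<Rightarrow> nat \<Rightarrow> int \<Rightarrow> (int \<Rightarrow> ('a, 'b) tens) set \<Rightarrow> (int \<Rightarrow> ('a, 'b) tens) set" where
  "qsys_diff R X dX Y dY k u = quot_diff (tsum R X Y) (tdiff R X dX Y dY) (tsub R X Y (k - int u))"

definition qsys_nu :: "'r ring \<Rightarrow> (int \<Rightarrow> ('r, 'a) module) \<Rightarrow> (int \<Rightarrow> ('r, 'b) module) \<Rightarrow> int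
     \<Rightarrow> nat \<Rightarrow> int \<Rightarrow> (int \<Rightarrow> ('a, 'b) tens) set \<Rightarrow> (int \<Rightarrow> ('a, 'b) tens) set" where
  "qsys_nu R X Y k u n S = tsub R X Y (k - int u) n #>\<^bsub>tsum R X Y n\<^esub> (SOME x. x \<in> S)"

definition tsys :: "'r ring \<Rightarrow> (int \<Rightarrow> ('r, 'a) module) \<Rightarrow> (int \<Rightarrow> ('r, 'b) module) \<Rightarrow> int
     \<Rightarrow> nat \<Rightarrow> int \<Rightarrow> (int \<Rightarrow> ('a, 'b) tens) monoid" where
  "tsys R X Y k u = tsum R X (trunc Y (k - int u))"

definition tsys_diff :: "'r ring \<Rightarrow> (int \<Rightarrow> ('r, 'a) module) \<Rightarrow> (int \<Rightarrow> 'a \<Rightarrow> 'a)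
     \<Rightarrow> (int \<Rightarrow> ('r, 'b) module) \<Rightarrow> (int \<Rightarrow> 'b \<Rightarrow> 'b) \<Rightarrow> int
     \<Rightarrow> nat \<Rightarrow> int \<Rightarrow> (int \<Rightarrow> ('a, 'b) tens) \<Rightarrow> (int \<Rightarrow> ('a, 'b) tens)" where
  "tsys_diff R X dX Y dY k u = tdiff R X dX (trunc Y (k - int u)) dY"

definition tsys_nu :: "'r ring \<Rightarrow> (int \<Rightarrow> ('r, 'a) module) \<Rightarrow> (int \<Rightarrow> ('r, 'b) module) \<Rightarrow> int
     \<Rightarrow> nat \<Rightarrow> int \<Rightarrow> (int \<Rightarrow> ('a, 'b) tens) \<Rightarrow> (int \<Rightarrow> ('a, 'b) tens)" where
  "tsys_nu R X Y k u = tincl R X (trunc Y (k - int u))"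

end

theory Submission
  imports Defs
begin


lemma quot_map:
  assumes G: "group G" and G': "group G'" and H: "subgroup H G" and HN: "H \<lhd> G"
    and H': "H' \<lhd> G'" and hom: "\<Phi> \<in> hom G G'" and img: "\<Phi> ` H \<subseteq> H'"
  shows "(\<lambda>S. H' #>\<^bsub>G'\<^esub> \<Phi> (SOME x. x \<in> S)) \<in> hom (G Mod H) (G' Mod H')"
    and "a \<in> carrier G \<Longrightarrow> H' #>\<^bsub>G'\<^esub> \<Phi> (SOME x. x \<in> H #>\<^bsub>G\<^esub> a) = H' #>\<^bsub>G'\<^esub> \<Phi> a"
proof -
  interpret G: group G by fact
  interpret G': group G' by fact
  interpret N: normal H G by fact
  interpret N': normal H' G' by fact
  have key: "H' #>\<^bsub>G'\<^esub> \<Phi> (SOME x. x \<in> H #>\<^bsub>G\<^esub> a) = H' #>\<^bsub>G'\<^esub> \<Phi> a" if a: "a \<in> carrier G" for a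
  proof -
    have "a \<in> H #>\<^bsub>G\<^esub> a" using a H by (rule G.rcos_self)
    hence s: "(SOME x. x \<in> H #>\<^bsub>G\<^esub> a) \<in> H #>\<^bsub>G\<^esub> a" by (rule someI)
    then obtain h where h: "h \<in> H" "(SOME x. x \<in> H #>\<^bsub>G\<^esub> a) = h \<otimes>\<^bsub>G\<^esub> a"
      unfolding r_coset_def by blast
    have hc: "h \<in> carrier G" using h(1) N.subset by blast
    have "\<Phi> (h \<otimes>\<^bsub>G\<^esub> a) = \<Phi> h \<otimes>\<^bsub>G'\<^esub> \<Phi> a" using hom hc a by (simp add: hom_mult)
    moreover have "\<Phi> h \<in> H'" using img h(1) by blast
    moreover have "\<Phi> a \<in> carrier G'" using hom a by (simp add: hom_in_carrier)
    ultimately have "H' #>\<^bsub>G'\<^esub> \<Phi> (h \<otimes>\<^bsub>G\<^esub> a) = (H' #>\<^bsub>G'\<^esub> \<Phi> h) #>\<^bsub>G'\<^esub> \<Phi> a"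
      using N'.subset by (simp add: G'.coset_mult_assoc subsetD)
    also have "H' #>\<^bsub>G'\<^esub> \<Phi> h = H'" using \<open>\<Phi> h \<in> H'\<close> N'.subgroup_axioms G'.is_group
      by (simp add: N'.rcos_const)
    finally show ?thesis using h by simp
  qed
  show "a \<in> carrier G \<Longrightarrow> H' #>\<^bsub>G'\<^esub> \<Phi> (SOME x. x \<in> H #>\<^bsub>G\<^esub> a) = H' #>\<^bsub>G'\<^esub> \<Phi> a" by (rule key)
  show "(\<lambda>S. H' #>\<^bsub>G'\<^esub> \<Phi> (SOME x. x \<in> S)) \<in> hom (G Mod H) (G' Mod H')"
  proof (rule homI)
    fix S assume "S \<in> carrier (G Mod H)"
    then obtain a where a: "a \<in> carrier G" "S = H #>\<^bsub>G\<^esub> a" by (auto simp: carrier_FactGroup)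
    show "H' #>\<^bsub>G'\<^esub> \<Phi> (SOME x. x \<in> S) \<in> carrier (G' Mod H')"
      using key[OF a(1)] a hom by (simp add: carrier_FactGroup hom_in_carrier)
  next
    fix S T assume "S \<in> carrier (G Mod H)" "T \<in> carrier (G Mod H)"
    then obtain a b where a: "a \<in> carrier G" "S = H #>\<^bsub>G\<^esub> a" and b: "b \<in> carrier G" "T = H #>\<^bsub>G\<^esub> b"
      by (auto simp: carrier_FactGroup)
    have ST: "S \<otimes>\<^bsub>G Mod H\<^esub> T = H #>\<^bsub>G\<^esub> (a \<otimes>\<^bsub>G\<^esub> b)" using a b by (simp add: N.rcos_sum)
    have "\<Phi> (a \<otimes>\<^bsub>G\<^esub> b) = \<Phi> a \<otimes>\<^bsub>G'\<^esub> \<Phi> b" using hom a b by (simp add: hom_mult)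
    then show "H' #>\<^bsub>G'\<^esub> \<Phi> (SOME x. x \<in> S \<otimes>\<^bsub>G Mod H\<^esub> T) =
      (H' #>\<^bsub>G'\<^esub> \<Phi> (SOME x. x \<in> S)) \<otimes>\<^bsub>G' Mod H'\<^esub> (H' #>\<^bsub>G'\<^esub> \<Phi> (SOME x. x \<in> T))"
      using ST key a b hom by (simp add: N'.rcos_sum hom_in_carrier)
  qed
qed

lemma quot_map_iso:
  assumes G: "group G" and G': "group G'" and H: "subgroup H G" and HN: "H \<lhd> G"
    and H': "H' \<lhd> G'" and hom: "\<Phi> \<in> hom G G'" and img: "\<Phi> ` H \<subseteq> H'"
    and inj: "\<And>x. x \<in> carrier G \<Longrightarrow> \<Phi> x \<in> H' \<Longrightarrow> x \<in> H"
    and surj: "\<And>y. y \<in> carrier G' \<Longrightarrow> \<exists>x\<in>carrier G. y \<otimes>\<^bsub>G'\<^esub> inv\<^bsub>G'\<^esub> (\<Phi> x) \<in> H'"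
  shows "(\<lambda>S. H' #>\<^bsub>G'\<^esub> \<Phi> (SOME x. x \<in> S)) \<in> iso (G Mod H) (G' Mod H')"
proof -
  interpret G: group G by fact
  interpret G': group G' by fact
  interpret N: normal H G by fact
  interpret N': normal H' G' by fact
  let ?\<psi> = "\<lambda>S. H' #>\<^bsub>G'\<^esub> \<Phi> (SOME x. x \<in> S)"
  have h: "?\<psi> \<in> hom (G Mod H) (G' Mod H')" by (rule quot_map(1)[OF assms(1-7)])
  have k: "\<And>a. a \<in> carrier G \<Longrightarrow> ?\<psi> (H #>\<^bsub>G\<^esub> a) = H' #>\<^bsub>G'\<^esub> \<Phi> a" by (rule quot_map(2)[OF assms(1-7)])
  interpret gh: group_hom "G Mod H" "G' Mod H'" ?\<psi>
    using h N.factorgroup_is_group N'.factorgroup_is_group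
    by (simp add: group_hom_axioms_def group_hom_def)
  show ?thesis unfolding gh.iso_iff
  proof (intro conjI subsetI ballI impI)
    fix T assume "T \<in> carrier (G' Mod H')"
    then obtain y where y: "y \<in> carrier G'" "T = H' #>\<^bsub>G'\<^esub> y" by (auto simp: carrier_FactGroup)
    obtain x where x: "x \<in> carrier G" "y \<otimes>\<^bsub>G'\<^esub> inv\<^bsub>G'\<^esub> (\<Phi> x) \<in> H'" using surj[OF y(1)] by blast
    have px: "\<Phi> x \<in> carrier G'" using hom x by (simp add: hom_in_carrier)
    have "y \<in> H' #>\<^bsub>G'\<^esub> \<Phi> x" using N'.rcos_module_rev[OF G'.is_group px y(1) x(2)] .
    hence "H' #>\<^bsub>G'\<^esub> \<Phi> x = H' #>\<^bsub>G'\<^esub> y" using G'.repr_independence px N'.subgroup_axioms by blast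
    then show "T \<in> ?\<psi> ` carrier (G Mod H)" using k[OF x(1)] y x(1)
      by (auto simp: carrier_FactGroup intro!: image_eqI[where x="H #>\<^bsub>G\<^esub> x"])
  next
    fix S assume S: "S \<in> carrier (G Mod H)" and e: "?\<psi> S = \<one>\<^bsub>G' Mod H'\<^esub>"
    then obtain a where a: "a \<in> carrier G" "S = H #>\<^bsub>G\<^esub> a" by (auto simp: carrier_FactGroup)
    have pa: "\<Phi> a \<in> carrier G'" using hom a by (simp add: hom_in_carrier)
    have "H' #>\<^bsub>G'\<^esub> \<Phi> a = H'" using e k[OF a(1)] a by simp
    hence "\<Phi> a \<in> H'" using G'.coset_join1 pa N'.subgroup_axioms by blast
    hence "a \<in> H" using inj a by blast
    then show "S = \<one>\<^bsub>G Mod H\<^esub>" using a by (simp add: N.rcos_const[OF G.is_group])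
  qed
qed


definition tmod :: "'r set \<Rightarrow> ('r, 'a) module \<Rightarrow> bool" where
  "tmod S A \<longleftrightarrow> (\<forall>a\<in>carrier A. \<forall>a'\<in>carrier A. a \<oplus>\<^bsub>A\<^esub> a' \<in> carrier A)
     \<and> (\<forall>r\<in>S. \<forall>a\<in>carrier A. r \<odot>\<^bsub>A\<^esub> a \<in> carrier A)
     \<and> \<zero>\<^bsub>A\<^esub> \<in> carrier A \<and> \<zero>\<^bsub>A\<^esub> \<oplus>\<^bsub>A\<^esub> \<zero>\<^bsub>A\<^esub> = \<zero>\<^bsub>A\<^esub>"

definition tmap :: "'r set \<Rightarrow> ('r, 'a) module \<Rightarrow> ('r, 'a) module \<Rightarrow> ('a \<Rightarrow> 'a) \<Rightarrow> bool" where
  "tmap S A A' f \<longleftrightarrow> (\<forall>a\<in>carrier A. f a \<in> carrier A')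
     \<and> (\<forall>a\<in>carrier A. \<forall>a'\<in>carrier A. f (a \<oplus>\<^bsub>A\<^esub> a') = f a \<oplus>\<^bsub>A'\<^esub> f a')
     \<and> (\<forall>r\<in>S. \<forall>a\<in>carrier A. f (r \<odot>\<^bsub>A\<^esub> a) = r \<odot>\<^bsub>A'\<^esub> f a)"

lemma tensor_rels_sub:
  fixes R :: "'r ring" and A :: "('r, 'a) module" and B :: "('r, 'b) module"
  assumes "tmod (carrier R) A" "tmod (carrier R) B"
  shows "tensor_rels R A B \<subseteq> carrier (free_Abelian_group (carrier A \<times> carrier B))"
proof -
  have k: "Poly_Mapping.keys (frag_of x - frag_of y - frag_of z) \<subseteq> {x, y, z}" for x y z :: "'a \<times> 'b"
    using keys_diff[of "frag_of x - frag_of y" "frag_of z"] keys_diff[of "frag_of x" "frag_of y"] by auto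
  have k2: "Poly_Mapping.keys (frag_of x - frag_of y) \<subseteq> {x, y}" for x y :: "'a \<times> 'b"
    using keys_diff[of "frag_of x" "frag_of y"] by auto
  have k': "frag_of x - frag_of y - frag_of z \<in> carrier (free_Abelian_group S)" if "x \<in> S" "y \<in> S" "z \<in> S" for x y z :: "'a \<times> 'b" and S
    using k[of x y z] that by auto
  have k2': "frag_of x - frag_of y \<in> carrier (free_Abelian_group S)" if "x \<in> S" "y \<in> S" for x y :: "'a \<times> 'b" and S
    using k2[of x y] that by auto
  have c: "\<forall>a\<in>carrier A. \<forall>a'\<in>carrier A. a \<oplus>\<^bsub>A\<^esub> a' \<in> carrier A"
    "\<forall>r\<in>carrier R. \<forall>a\<in>carrier A. r \<odot>\<^bsub>A\<^esub> a \<in> carrier A"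
    "\<forall>a\<in>carrier B. \<forall>a'\<in>carrier B. a \<oplus>\<^bsub>B\<^esub> a' \<in> carrier B"
    "\<forall>r\<in>carrier R. \<forall>a\<in>carrier B. r \<odot>\<^bsub>B\<^esub> a \<in> carrier B"
    using assms by (auto simp: tmod_def)
  show ?thesis unfolding tensor_rels_def
  proof (intro Un_least subsetI)
    fix x assume "x \<in> {frag_of (a \<oplus>\<^bsub>A\<^esub> a', b) - frag_of (a, b) - frag_of (a', b) |a a' b.
        a \<in> carrier A \<and> a' \<in> carrier A \<and> b \<in> carrier B}"
    then obtain a a' b where "x = frag_of (a \<oplus>\<^bsub>A\<^esub> a', b) - frag_of (a, b) - frag_of (a', b)"
        "a \<in> carrier A" "a' \<in> carrier A" "b \<in> carrier B" by blast
    then show "x \<in> carrier (free_Abelian_group (carrier A \<times> carrier B))"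
      using c apply (simp only:) apply (rule k') apply auto done
  next
    fix x assume "x \<in> {frag_of (a, b \<oplus>\<^bsub>B\<^esub> b') - frag_of (a, b) - frag_of (a, b') |a b b'.
        a \<in> carrier A \<and> b \<in> carrier B \<and> b' \<in> carrier B}"
    then obtain a b b' where "x = frag_of (a, b \<oplus>\<^bsub>B\<^esub> b') - frag_of (a, b) - frag_of (a, b')"
        "a \<in> carrier A" "b \<in> carrier B" "b' \<in> carrier B" by blast
    then show "x \<in> carrier (free_Abelian_group (carrier A \<times> carrier B))"
      using c by (simp only:, intro k') auto
  next
    fix x assume "x \<in> {frag_of (r \<odot>\<^bsub>A\<^esub> a, b) - frag_of (a, r \<odot>\<^bsub>B\<^esub> b) | r a b.
        r \<in> carrier R \<and> a \<in> carrier A \<and> b \<in> carrier B}"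
    then obtain r a b where "x = frag_of (r \<odot>\<^bsub>A\<^esub> a, b) - frag_of (a, r \<odot>\<^bsub>B\<^esub> b)"
        "r \<in> carrier R" "a \<in> carrier A" "b \<in> carrier B" by blast
    then show "x \<in> carrier (free_Abelian_group (carrier A \<times> carrier B))"
      using c by (simp only:, intro k2') auto
  qed
qed

lemma tensor_subgroup_sub:
  assumes "tmod (carrier R) A" "tmod (carrier R) B"
  shows "subgroup (tensor_subgroup R A B) (free_Abelian_group (carrier A \<times> carrier B))"
  unfolding tensor_subgroup_def
  by (rule group.generate_is_subgroup[OF group_free_Abelian_group tensor_rels_sub[OF assms]])

lemma tensor_comm_group:
  assumes "tmod (carrier R) A" "tmod (carrier R) B"
  shows "comm_group (tensor_mod R A B)"
  unfolding tensor_mod_def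
  by (rule comm_group.abelian_FactGroup[OF abelian_free_Abelian_group tensor_subgroup_sub[OF assms]])

lemma tensor_normal:
  assumes "tmod (carrier R) A" "tmod (carrier R) B"
  shows "tensor_subgroup R A B \<lhd> free_Abelian_group (carrier A \<times> carrier B)"
  by (rule comm_group.subgroup_imp_normal[OF abelian_free_Abelian_group tensor_subgroup_sub[OF assms]])

lemma frag_zero_in_tensor_subgroup:
  assumes "tmod (carrier R) A" "tmod (carrier R) B" "a \<in> carrier A"
  shows "frag_of (a, \<zero>\<^bsub>B\<^esub>) \<in> tensor_subgroup R A B"
proof -
  let ?F = "free_Abelian_group (carrier A \<times> carrier B)"
  have z: "\<zero>\<^bsub>B\<^esub> \<in> carrier B" "\<zero>\<^bsub>B\<^esub> \<oplus>\<^bsub>B\<^esub> \<zero>\<^bsub>B\<^esub> = \<zero>\<^bsub>B\<^esub>" using assms(2) by (auto simp: tmod_def)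
  have "frag_of (a, \<zero>\<^bsub>B\<^esub> \<oplus>\<^bsub>B\<^esub> \<zero>\<^bsub>B\<^esub>) - frag_of (a, \<zero>\<^bsub>B\<^esub>) - frag_of (a, \<zero>\<^bsub>B\<^esub>) \<in> tensor_rels R A B"
    unfolding tensor_rels_def using assms(3) z(1) by blast
  hence r: "- frag_of (a, \<zero>\<^bsub>B\<^esub>) \<in> tensor_rels R A B" using z(2) by simp
  have "inv\<^bsub>?F\<^esub> (- frag_of (a, \<zero>\<^bsub>B\<^esub>)) \<in> tensor_subgroup R A B"
    unfolding tensor_subgroup_def by (rule generate.inv[OF r])
  moreover have "inv\<^bsub>?F\<^esub> (- frag_of (a, \<zero>\<^bsub>B\<^esub>)) = frag_of (a, \<zero>\<^bsub>B\<^esub>)"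
    using assms(3) z(1) by (subst inv_free_Abelian_group) auto
  ultimately show ?thesis by simp
qed

lemma tensor_subgroup_trivial:
  fixes R :: "'r ring" and A :: "('r, 'a) module" and B :: "('r, 'b) module"
  assumes "tmod (carrier R) A" "tmod (carrier R) B" "carrier B = {\<zero>\<^bsub>B\<^esub>}"
  shows "tensor_subgroup R A B = carrier (free_Abelian_group (carrier A \<times> carrier B))"
proof
  let ?F = "free_Abelian_group (carrier A \<times> carrier B)"
  interpret S: subgroup "tensor_subgroup R A B" ?F by (rule tensor_subgroup_sub[OF assms(1,2)])
  show "tensor_subgroup R A B \<subseteq> carrier ?F" by (rule S.subset)
  show "carrier ?F \<subseteq> tensor_subgroup R A B"
  proof
    fix c assume "c \<in> carrier ?F"
    hence "Poly_Mapping.keys c \<subseteq> carrier A \<times> carrier B" by simp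
    then show "c \<in> tensor_subgroup R A B"
    proof (rule free_Abelian_group_induct)
      show "0 \<in> tensor_subgroup R A B" using S.one_closed by simp
    next
      fix x y :: "'a \<times> 'b \<Rightarrow>\<^sub>0 int"
      assume xy: "Poly_Mapping.keys x \<subseteq> carrier A \<times> carrier B" "Poly_Mapping.keys y \<subseteq> carrier A \<times> carrier B"
        "x \<in> tensor_subgroup R A B" "y \<in> tensor_subgroup R A B"
      have "x \<otimes>\<^bsub>?F\<^esub> inv\<^bsub>?F\<^esub> y \<in> tensor_subgroup R A B" using xy by blast
      then show "x - y \<in> tensor_subgroup R A B" using xy by simp
    next
      fix p assume "p \<in> carrier A \<times> carrier B"
      then obtain a where "p = (a, \<zero>\<^bsub>B\<^esub>)" "a \<in> carrier A" using assms(3) by auto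
      then show "frag_of p \<in> tensor_subgroup R A B" using frag_zero_in_tensor_subgroup[OF assms(1,2)] by simp
    qed
  qed
qed

lemma tensor_trivial_carrier:
  fixes R :: "'r ring" and A :: "('r, 'a) module" and B :: "('r, 'b) module"
  assumes "tmod (carrier R) A" "tmod (carrier R) B" "carrier B = {\<zero>\<^bsub>B\<^esub>}"
  shows "carrier (tensor_mod R A B) = {\<one>\<^bsub>tensor_mod R A B\<^esub>}"
proof -
  let ?F = "free_Abelian_group (carrier A \<times> carrier B)"
  interpret S: subgroup "tensor_subgroup R A B" ?F by (rule tensor_subgroup_sub[OF assms(1,2)])
  have e: "tensor_subgroup R A B = carrier ?F" by (rule tensor_subgroup_trivial[OF assms])
  have "tensor_subgroup R A B #>\<^bsub>?F\<^esub> c = tensor_subgroup R A B" if "c \<in> carrier ?F" for c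
    using S.rcos_const[OF group_free_Abelian_group] that e by simp
  moreover have "(0::'a \<times> 'b \<Rightarrow>\<^sub>0 int) \<in> carrier ?F" by simp
  ultimately have "carrier (?F Mod tensor_subgroup R A B) = {tensor_subgroup R A B}"
    unfolding carrier_FactGroup by force
  then show ?thesis unfolding tensor_mod_def by simp
qed

definition tphi :: "('a \<Rightarrow> 'a) \<Rightarrow> ('b \<Rightarrow> 'b) \<Rightarrow> ('a \<times> 'b \<Rightarrow>\<^sub>0 int) \<Rightarrow> ('a \<times> 'b \<Rightarrow>\<^sub>0 int)" where
  "tphi f g = frag_extend (\<lambda>(a, b). frag_of (f a, g b))"

lemma tphi_hom:
  assumes "\<And>a. a \<in> carrier A \<Longrightarrow> f a \<in> carrier A'" "\<And>b. b \<in> carrier B \<Longrightarrow> g b \<in> carrier B'"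
  shows "tphi f g \<in> hom (free_Abelian_group (carrier A \<times> carrier B)) (free_Abelian_group (carrier A' \<times> carrier B'))"
proof (rule homI)
  fix c assume "c \<in> carrier (free_Abelian_group (carrier A \<times> carrier B))"
  hence c: "Poly_Mapping.keys c \<subseteq> carrier A \<times> carrier B" by simp
  have "Poly_Mapping.keys (tphi f g c) \<subseteq> (\<Union>x \<in> Poly_Mapping.keys c. Poly_Mapping.keys ((\<lambda>(a, b). frag_of (f a, g b)) x))"
    unfolding tphi_def by (rule keys_frag_extend)
  also have "\<dots> \<subseteq> carrier A' \<times> carrier B'" using c assms by (auto split: prod.splits)
  finally show "tphi f g c \<in> carrier (free_Abelian_group (carrier A' \<times> carrier B'))" by simp
qed (simp add: tphi_def frag_extend_add)

lemma tphi_rels: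
  assumes A: "tmod (carrier R) A" "tmod (carrier R) B" "tmod (carrier R) A'" "tmod (carrier R) B'"
    and f: "tmap (carrier R) A A' f" and g: "tmap (carrier R) B B' g"
  shows "tphi f g ` tensor_subgroup R A B \<subseteq> tensor_subgroup R A' B'"
proof -
  let ?F = "free_Abelian_group (carrier A \<times> carrier B)"
  let ?F' = "free_Abelian_group (carrier A' \<times> carrier B')"
  interpret S': subgroup "tensor_subgroup R A' B'" ?F' by (rule tensor_subgroup_sub[OF A(3,4)])
  have fc: "\<And>a. a \<in> carrier A \<Longrightarrow> f a \<in> carrier A'" using f by (simp add: tmap_def)
  have gc: "\<And>b. b \<in> carrier B \<Longrightarrow> g b \<in> carrier B'" using g by (simp add: tmap_def)
  have fc: "\<And>a. a \<in> carrier A \<Longrightarrow> f a \<in> carrier A'" using f by (simp add: tmap_def)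
  have gc: "\<And>b. b \<in> carrier B \<Longrightarrow> g b \<in> carrier B'" using g by (simp add: tmap_def)
  have rel: "tphi f g r \<in> tensor_rels R A' B'" if "r \<in> tensor_rels R A B" for r
  proof -
    have fa: "\<And>a a'. a \<in> carrier A \<Longrightarrow> a' \<in> carrier A \<Longrightarrow> f (a \<oplus>\<^bsub>A\<^esub> a') = f a \<oplus>\<^bsub>A'\<^esub> f a'"
      and fs: "\<And>s a. s \<in> carrier R \<Longrightarrow> a \<in> carrier A \<Longrightarrow> f (s \<odot>\<^bsub>A\<^esub> a) = s \<odot>\<^bsub>A'\<^esub> f a"
      using f by (auto simp: tmap_def)
    have ga: "\<And>a a'. a \<in> carrier B \<Longrightarrow> a' \<in> carrier B \<Longrightarrow> g (a \<oplus>\<^bsub>B\<^esub> a') = g a \<oplus>\<^bsub>B'\<^esub> g a'"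
      and gs: "\<And>s a. s \<in> carrier R \<Longrightarrow> a \<in> carrier B \<Longrightarrow> g (s \<odot>\<^bsub>B\<^esub> a) = s \<odot>\<^bsub>B'\<^esub> g a"
      using g by (auto simp: tmap_def)
    have ev: "tphi f g (frag_of x - frag_of y - frag_of z) = frag_of (f (fst x), g (snd x)) - frag_of (f (fst y), g (snd y)) - frag_of (f (fst z), g (snd z))"
      "tphi f g (frag_of x - frag_of y) = frag_of (f (fst x), g (snd x)) - frag_of (f (fst y), g (snd y))" for x y z
      by (simp_all add: tphi_def frag_extend_diff case_prod_unfold)
    from that consider
        (a) a a' b where "r = frag_of (a \<oplus>\<^bsub>A\<^esub> a', b) - frag_of (a, b) - frag_of (a', b)" "a \<in> carrier A" "a' \<in> carrier A" "b \<in> carrier B"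
      | (b) a b b' where "r = frag_of (a, b \<oplus>\<^bsub>B\<^esub> b') - frag_of (a, b) - frag_of (a, b')" "a \<in> carrier A" "b \<in> carrier B" "b' \<in> carrier B"
      | (c) s a b where "r = frag_of (s \<odot>\<^bsub>A\<^esub> a, b) - frag_of (a, s \<odot>\<^bsub>B\<^esub> b)" "s \<in> carrier R" "a \<in> carrier A" "b \<in> carrier B"
      unfolding tensor_rels_def by blast
    then show ?thesis
    proof cases
      case a
      have e: "tphi f g r = frag_of (f a \<oplus>\<^bsub>A'\<^esub> f a', g b) - frag_of (f a, g b) - frag_of (f a', g b)"
        using a by (simp add: ev fa)
      show ?thesis unfolding tensor_rels_def e using a fc gc by blast
    next
      case b
      have e: "tphi f g r = frag_of (f a, g b \<oplus>\<^bsub>B'\<^esub> g b') - frag_of (f a, g b) - frag_of (f a, g b')"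
        using b by (simp add: ev ga)
      show ?thesis unfolding tensor_rels_def e using b fc gc by blast
    next
      case c
      have e: "tphi f g r = frag_of (s \<odot>\<^bsub>A'\<^esub> f a, g b) - frag_of (f a, s \<odot>\<^bsub>B'\<^esub> g b)"
        using c by (simp add: ev fs gs)
      show ?thesis unfolding tensor_rels_def e using c fc gc by blast
    qed
  qed
  have rs: "tensor_rels R A B \<subseteq> carrier ?F" by (rule tensor_rels_sub[OF A(1,2)])
  have th: "tphi f g \<in> hom ?F ?F'" by (rule tphi_hom) (auto intro: fc gc)
  show ?thesis
  proof
    fix y assume "y \<in> tphi f g ` tensor_subgroup R A B"
    then obtain x where x: "x \<in> generate ?F (tensor_rels R A B)" "y = tphi f g x"
      unfolding tensor_subgroup_def by blast
    have "tphi f g x \<in> tensor_subgroup R A' B'" using x(1)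
    proof (induction rule: generate.induct)
      case one show ?case using S'.one_closed by (simp add: tphi_def)
    next
      case (incl h) show ?case unfolding tensor_subgroup_def by (rule generate.incl[OF rel[OF incl]])
    next
      case (inv h)
      have "h \<in> carrier ?F" using rs inv by blast
      hence hk: "Poly_Mapping.keys h \<subseteq> carrier A \<times> carrier B" by simp
      have "inv\<^bsub>?F'\<^esub> (tphi f g h) \<in> tensor_subgroup R A' B'"
        unfolding tensor_subgroup_def by (rule generate.inv[OF rel[OF inv]])
      moreover have "tphi f g h \<in> carrier ?F'" using th \<open>h \<in> carrier ?F\<close> by (rule hom_in_carrier)
      ultimately show ?case using hk by (simp add: tphi_def frag_extend_minus)
    next
      case (eng h1 h2)
      then show ?case using S'.m_closed by (simp add: tphi_def frag_extend_add)
    qed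
    then show "y \<in> tensor_subgroup R A' B'" using x by simp
  qed
qed

lemma tensor_map_eq_quot:
  "tensor_map R A' B' f g = (\<lambda>S. tensor_subgroup R A' B' #>\<^bsub>free_Abelian_group (carrier A' \<times> carrier B')\<^esub> tphi f g (SOME x. x \<in> S))"
  by (simp add: tensor_map_def tphi_def fun_eq_iff)

lemma tensor_map_hom:
  assumes A: "tmod (carrier R) A" "tmod (carrier R) B" "tmod (carrier R) A'" "tmod (carrier R) B'"
    and f: "tmap (carrier R) A A' f" and g: "tmap (carrier R) B B' g"
  shows "tensor_map R A' B' f g \<in> hom (tensor_mod R A B) (tensor_mod R A' B')"
  unfolding tensor_map_eq_quot tensor_mod_def
  by (rule quot_map(1)[OF group_free_Abelian_group group_free_Abelian_group tensor_subgroup_sub[OF A(1,2)]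
        tensor_normal[OF A(1,2)] tensor_normal[OF A(3,4)] tphi_hom tphi_rels[OF assms]])
     (use f g in \<open>auto simp: tmap_def\<close>)

lemma tensor_map_id:
  assumes A: "tmod (carrier R) A" "tmod (carrier R) B" and C: "C \<in> carrier (tensor_mod R A B)"
  shows "tensor_map R A B (\<lambda>x. x) (\<lambda>y. y) C = C"
proof -
  let ?F = "free_Abelian_group (carrier A \<times> carrier B)"
  obtain c where c: "c \<in> carrier ?F" "C = tensor_subgroup R A B #>\<^bsub>?F\<^esub> c"
    using C by (auto simp: tensor_mod_def carrier_FactGroup)
  have idh: "tphi (\<lambda>x. x) (\<lambda>y. y) = (\<lambda>x. x)"
    by (rule ext, simp add: tphi_def case_prod_unfold flip: frag_expansion)
  have "tensor_map R A B (\<lambda>x. x) (\<lambda>y. y) C = tensor_subgroup R A B #>\<^bsub>?F\<^esub> tphi (\<lambda>x. x) (\<lambda>y. y) c"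
    unfolding tensor_map_eq_quot c(2)
    by (rule quot_map(2)[OF group_free_Abelian_group group_free_Abelian_group tensor_subgroup_sub[OF A(1,2)]
        tensor_normal[OF A(1,2)] tensor_normal[OF A(1,2)] tphi_hom _ c(1)]) (auto simp: idh)
  then show ?thesis using c by (simp add: idh)
qed


definition fam :: "('i \<Rightarrow> ('e, 'x) monoid_scheme) \<Rightarrow> ('i \<Rightarrow> 'e) monoid" where
  "fam G = \<lparr>carrier = {f. \<forall>i. f i \<in> carrier (G i)},
     mult = (\<lambda>f g i. f i \<otimes>\<^bsub>G i\<^esub> g i), one = (\<lambda>i. \<one>\<^bsub>G i\<^esub>)\<rparr>"

lemma fam_carrier [simp]: "f \<in> carrier (fam G) \<longleftrightarrow> (\<forall>i. f i \<in> carrier (G i))"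
  and fam_mult [simp]: "f \<otimes>\<^bsub>fam G\<^esub> g = (\<lambda>i. f i \<otimes>\<^bsub>G i\<^esub> g i)"
  and fam_one [simp]: "\<one>\<^bsub>fam G\<^esub> = (\<lambda>i. \<one>\<^bsub>G i\<^esub>)"
  by (simp_all add: fam_def)

lemma fam_comm_group:
  assumes "\<And>i. comm_group (G i)" shows "comm_group (fam G)"
proof -
  have g: "group (G i)" "comm_monoid (G i)" for i using assms by (auto simp: comm_group_def)
  show ?thesis
  proof (rule comm_groupI)
    fix x assume x: "x \<in> carrier (fam G)"
    show "\<exists>y\<in>carrier (fam G). y \<otimes>\<^bsub>fam G\<^esub> x = \<one>\<^bsub>fam G\<^esub>"
      using x g by (intro bexI[of _ "\<lambda>i. inv\<^bsub>G i\<^esub> (x i)"]) (auto simp: group.l_inv group.inv_closed)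
  next
    fix x y z assume "x \<in> carrier (fam G)" "y \<in> carrier (fam G)" "z \<in> carrier (fam G)"
    then show "x \<otimes>\<^bsub>fam G\<^esub> y \<otimes>\<^bsub>fam G\<^esub> z = x \<otimes>\<^bsub>fam G\<^esub> (y \<otimes>\<^bsub>fam G\<^esub> z)"
      using g by (simp add: comm_monoid.axioms(1) monoid.m_assoc)
  next
    fix x y assume "x \<in> carrier (fam G)" "y \<in> carrier (fam G)"
    then show "x \<otimes>\<^bsub>fam G\<^esub> y = y \<otimes>\<^bsub>fam G\<^esub> x"
      using g by (simp add: comm_monoid.m_comm)
  next
    fix x y assume "x \<in> carrier (fam G)" "y \<in> carrier (fam G)"
    then show "x \<otimes>\<^bsub>fam G\<^esub> y \<in> carrier (fam G)"
      using g by (simp add: comm_monoid.axioms(1) monoid.m_closed)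
  next
    show "\<one>\<^bsub>fam G\<^esub> \<in> carrier (fam G)" using g by (simp add: comm_monoid.axioms(1) monoid.one_closed)
  next
    fix x assume "x \<in> carrier (fam G)"
    then show "\<one>\<^bsub>fam G\<^esub> \<otimes>\<^bsub>fam G\<^esub> x = x"
      using g by (simp add: comm_monoid.axioms(1) monoid.l_one)
  qed
qed

lemma fam_inv:
  assumes "\<And>i. comm_group (G i)" "f \<in> carrier (fam G)"
  shows "inv\<^bsub>fam G\<^esub> f = (\<lambda>i. inv\<^bsub>G i\<^esub> (f i))"
proof -
  interpret FG: comm_group "fam G" by (rule fam_comm_group[OF assms(1)])
  show ?thesis
    by (rule FG.inv_equality) (use assms in \<open>auto simp: comm_group_def group.l_inv group.inv_closed\<close>)
qed

lemma sub_comm_group: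
  assumes "comm_group G" "subgroup H G" shows "comm_group (G\<lparr>carrier := H\<rparr>)"
proof (rule group.group_comm_groupI)
  show "group (G\<lparr>carrier := H\<rparr>)" using assms by (simp add: comm_group_def subgroup.subgroup_is_group)
qed (use assms in \<open>auto simp: comm_group_def comm_monoid.m_comm subgroup.mem_carrier\<close>)

definition fsup :: "('i \<Rightarrow> ('e, 'x) monoid_scheme) \<Rightarrow> ('i \<Rightarrow> 'e) set" where
  "fsup G = {f \<in> carrier (fam G). finite {i. f i \<noteq> \<one>\<^bsub>G i\<^esub>}}"

lemma fsup_subgroup_cond:
  assumes G: "\<And>i. comm_group (G i)"
  shows "subgroup {f \<in> fsup G. \<forall>i. P i \<longrightarrow> f i = \<one>\<^bsub>G i\<^esub>} (fam G)"
proof -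
  interpret FG: comm_group "fam G" by (rule fam_comm_group[OF G])
  have gi: "group (G i)" for i using G by (simp add: comm_group_def)
  show ?thesis
  proof (rule FG.subgroupI)
    show "{f \<in> fsup G. \<forall>i. P i \<longrightarrow> f i = \<one>\<^bsub>G i\<^esub>} \<subseteq> carrier (fam G)" by (auto simp: fsup_def)
    show "{f \<in> fsup G. \<forall>i. P i \<longrightarrow> f i = \<one>\<^bsub>G i\<^esub>} \<noteq> {}"
      using gi by (auto simp: fsup_def intro!: exI[of _ "\<lambda>i. \<one>\<^bsub>G i\<^esub>"] group.is_monoid monoid.one_closed)
  next
    fix a assume a: "a \<in> {f \<in> fsup G. \<forall>i. P i \<longrightarrow> f i = \<one>\<^bsub>G i\<^esub>}"
    hence ac: "a \<in> carrier (fam G)" by (simp add: fsup_def)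
    have "{i. inv\<^bsub>G i\<^esub> (a i) \<noteq> \<one>\<^bsub>G i\<^esub>} \<subseteq> {i. a i \<noteq> \<one>\<^bsub>G i\<^esub>}"
      using gi ac by (auto simp: group.inv_eq_1_iff)
    then show "inv\<^bsub>fam G\<^esub> a \<in> {f \<in> fsup G. \<forall>i. P i \<longrightarrow> f i = \<one>\<^bsub>G i\<^esub>}"
      using a ac gi by (auto simp: fsup_def fam_inv[OF G] group.inv_closed group.inv_eq_1_iff group.is_monoid monoid.inv_one intro: finite_subset)
  next
    fix a b assume a: "a \<in> {f \<in> fsup G. \<forall>i. P i \<longrightarrow> f i = \<one>\<^bsub>G i\<^esub>}"
      and b: "b \<in> {f \<in> fsup G. \<forall>i. P i \<longrightarrow> f i = \<one>\<^bsub>G i\<^esub>}"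
    have "{i. a i \<otimes>\<^bsub>G i\<^esub> b i \<noteq> \<one>\<^bsub>G i\<^esub>} \<subseteq> {i. a i \<noteq> \<one>\<^bsub>G i\<^esub>} \<union> {i. b i \<noteq> \<one>\<^bsub>G i\<^esub>}"
      using gi a b by (auto simp: fsup_def group.is_monoid monoid.l_one)
    then show "a \<otimes>\<^bsub>fam G\<^esub> b \<in> {f \<in> fsup G. \<forall>i. P i \<longrightarrow> f i = \<one>\<^bsub>G i\<^esub>}"
      using a b gi by (auto simp: fsup_def group.is_monoid monoid.m_closed monoid.l_one intro: finite_subset)
  qed
qed

lemma fsup_subgroup:
  assumes G: "\<And>i. comm_group (G i)"
  shows "subgroup (fsup G) (fam G)"
  using fsup_subgroup_cond[OF G, where P="\<lambda>i. False"] by simp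


lemma abelian_idem_zero:
  assumes "abelian_group M" "x \<in> carrier M" "x \<oplus>\<^bsub>M\<^esub> x = x"
  shows "x = \<zero>\<^bsub>M\<^esub>"
proof -
  interpret abelian_group M by fact
  show ?thesis using assms(2,3) add.l_cancel_one[of x x] by simp
qed

definition cxok :: "'r ring \<Rightarrow> (int \<Rightarrow> ('r, 'a) module) \<Rightarrow> (int \<Rightarrow> 'a \<Rightarrow> 'a)
     \<Rightarrow> (int \<Rightarrow> ('r, 'b) module) \<Rightarrow> (int \<Rightarrow> 'b \<Rightarrow> 'b) \<Rightarrow> bool" where
  "cxok R X dX Y dY \<longleftrightarrow> (\<forall>i. tmod (carrier R) (X i)) \<and> (\<forall>i. tmap (carrier R) (X i) (X (i - 1)) (dX i))
     \<and> (\<forall>j. tmod (carrier R) (Y j)) \<and> (\<forall>j. tmap (carrier R) (Y j) (Y (j - 1)) (dY j))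
     \<and> (\<forall>j. dY j \<zero>\<^bsub>Y j\<^esub> = \<zero>\<^bsub>Y (j - 1)\<^esub>) \<and> (\<forall>j. \<forall>r\<in>carrier R. r \<odot>\<^bsub>Y j\<^esub> \<zero>\<^bsub>Y j\<^esub> = \<zero>\<^bsub>Y j\<^esub>)"

lemma lmodule_tmod:
  assumes "lmodule R M" shows "tmod (carrier R) M"
proof -
  interpret abelian_group M using assms by (simp add: lmodule_def)
  show ?thesis using assms by (auto simp: tmod_def lmodule_def)
qed

lemma lmod_hom_tmap:
  assumes "f \<in> lmod_hom R M N" shows "tmap (carrier R) M N f"
  using assms by (auto simp: tmap_def lmod_hom_def)

lemma lmod_hom_zero:
  assumes "lmodule R M" "lmodule R N" "f \<in> lmod_hom R M N"
  shows "f \<zero>\<^bsub>M\<^esub> = \<zero>\<^bsub>N\<^esub>"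
proof -
  interpret M: abelian_group M using assms by (simp add: lmodule_def)
  have N: "abelian_group N" using assms by (simp add: lmodule_def)
  have "\<forall>x\<in>carrier M. \<forall>y\<in>carrier M. f (x \<oplus>\<^bsub>M\<^esub> y) = f x \<oplus>\<^bsub>N\<^esub> f y" using assms(3) by (simp add: lmod_hom_def)
  hence "f (\<zero>\<^bsub>M\<^esub> \<oplus>\<^bsub>M\<^esub> \<zero>\<^bsub>M\<^esub>) = f \<zero>\<^bsub>M\<^esub> \<oplus>\<^bsub>N\<^esub> f \<zero>\<^bsub>M\<^esub>" using M.zero_closed by blast
  hence "f \<zero>\<^bsub>M\<^esub> = f \<zero>\<^bsub>M\<^esub> \<oplus>\<^bsub>N\<^esub> f \<zero>\<^bsub>M\<^esub>" by simp
  then show ?thesis using abelian_idem_zero[OF N] assms(3) by (simp add: lmod_hom_def)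
qed

lemma lmodule_smult_zero:
  assumes "lmodule R M" "r \<in> carrier R"
  shows "r \<odot>\<^bsub>M\<^esub> \<zero>\<^bsub>M\<^esub> = \<zero>\<^bsub>M\<^esub>"
proof -
  interpret M: abelian_group M using assms by (simp add: lmodule_def)
  have c: "r \<odot>\<^bsub>M\<^esub> \<zero>\<^bsub>M\<^esub> \<in> carrier M" using assms by (simp add: lmodule_def)
  have "\<forall>a\<in>carrier R. \<forall>x\<in>carrier M. \<forall>y\<in>carrier M. a \<odot>\<^bsub>M\<^esub> (x \<oplus>\<^bsub>M\<^esub> y) = a \<odot>\<^bsub>M\<^esub> x \<oplus>\<^bsub>M\<^esub> a \<odot>\<^bsub>M\<^esub> y"
    using assms by (simp add: lmodule_def)
  hence "r \<odot>\<^bsub>M\<^esub> (\<zero>\<^bsub>M\<^esub> \<oplus>\<^bsub>M\<^esub> \<zero>\<^bsub>M\<^esub>) = r \<odot>\<^bsub>M\<^esub> \<zero>\<^bsub>M\<^esub> \<oplus>\<^bsub>M\<^esub> r \<odot>\<^bsub>M\<^esub> \<zero>\<^bsub>M\<^esub>"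
    using assms(2) M.zero_closed by blast
  hence "r \<odot>\<^bsub>M\<^esub> \<zero>\<^bsub>M\<^esub> = r \<odot>\<^bsub>M\<^esub> \<zero>\<^bsub>M\<^esub> \<oplus>\<^bsub>M\<^esub> r \<odot>\<^bsub>M\<^esub> \<zero>\<^bsub>M\<^esub>" by simp
  then show ?thesis using abelian_idem_zero[OF M.abelian_group_axioms c] by simp
qed

lemma carrier_opp_ring [simp]: "carrier (opp_ring R) = carrier R"
  by (simp add: opp_ring_def)

lemma cxok_intro:
  assumes "is_complex (opp_ring R) X dX" "is_complex R Y dY"
  shows "cxok R X dX Y dY"
proof -
  have X: "lmodule (opp_ring R) (X i)" "dX i \<in> lmod_hom (opp_ring R) (X i) (X (i - 1))" for i
    using assms by (auto simp: is_complex_def)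
  have Y: "lmodule R (Y j)" "dY j \<in> lmod_hom R (Y j) (Y (j - 1))" for j
    using assms by (auto simp: is_complex_def)
  show ?thesis unfolding cxok_def
    using lmodule_tmod[OF X(1)] lmod_hom_tmap[OF X(2)] lmodule_tmod[OF Y(1)] lmod_hom_tmap[OF Y(2)]
      lmod_hom_zero[OF Y(1) Y(1) Y(2)] lmodule_smult_zero[OF Y(1)]
    by simp
qed

definition zeroabove :: "(int \<Rightarrow> ('r, 'b) module) \<Rightarrow> int \<Rightarrow> bool" where
  "zeroabove Y k \<longleftrightarrow> (\<forall>j>k. carrier (Y j) = {\<zero>\<^bsub>Y j\<^esub>})"

lemma zeroabove_intro:
  assumes "bdd_above_with_sup Y k" shows "zeroabove Y k"
  unfolding zeroabove_def
proof (intro allI impI)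
  fix j assume j: "k < j"
  have "j \<notin> nonzero_degrees Y"
  proof
    assume "j \<in> nonzero_degrees Y"
    hence "j \<le> Sup (nonzero_degrees Y)" using assms by (auto simp: bdd_above_with_sup_def intro: cSup_upper)
    thus False using assms j by (simp add: bdd_above_with_sup_def)
  qed
  then show "carrier (Y j) = {\<zero>\<^bsub>Y j\<^esub>}" by (simp add: nonzero_degrees_def)
qed

lemma trunc_in [simp]: "j \<le> m \<Longrightarrow> trunc Y m j = Y j"
  by (simp add: trunc_def)

lemma trunc_out:
  assumes "m < j"
  shows "carrier (trunc Y m j) = {\<zero>\<^bsub>Y j\<^esub>}" "zero (trunc Y m j) = \<zero>\<^bsub>Y j\<^esub>"
    "add (trunc Y m j) = add (Y j)" "smult (trunc Y m j) = smult (Y j)"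
  using assms by (simp_all add: trunc_def)

lemma trunc_gen:
  shows "zero (trunc Y m j) = \<zero>\<^bsub>Y j\<^esub>" "add (trunc Y m j) = add (Y j)" "smult (trunc Y m j) = smult (Y j)"
  by (simp_all add: trunc_def)

lemma trunc_carrier_sub: "tmod S (Y j) \<Longrightarrow> carrier (trunc Y m j) \<subseteq> carrier (Y j)"
  by (auto simp: trunc_def tmod_def)

lemma trunc_top:
  assumes "zeroabove Y k" "k \<le> m" shows "trunc Y m = Y"
proof
  fix j show "trunc Y m j = Y j"
  proof (cases "j \<le> m")
    case False
    then have "carrier (Y j) = {\<zero>\<^bsub>Y j\<^esub>}" using assms by (simp add: zeroabove_def)
    then show ?thesis using False by (simp add: trunc_def)
  qed simp
qed

lemma zeroabove_trunc: "zeroabove (trunc Y m) m"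
  by (simp add: zeroabove_def trunc_out)

lemma tmod_trunc:
  assumes "tmod S (Y j)" "\<forall>r\<in>S. r \<odot>\<^bsub>Y j\<^esub> \<zero>\<^bsub>Y j\<^esub> = \<zero>\<^bsub>Y j\<^esub>"
  shows "tmod S (trunc Y m j)"
  using assms by (cases "j \<le> m") (auto simp: tmod_def trunc_def)

lemma tmap_sub:
  assumes "tmap S A B f" "carrier A' \<subseteq> carrier A" "add A' = add A" "smult A' = smult A"
    "\<And>a. a \<in> carrier A' \<Longrightarrow> f a \<in> carrier B'" "add B' = add B" "smult B' = smult B"
  shows "tmap S A' B' f"
proof -
  have "\<forall>a\<in>carrier A. \<forall>a'\<in>carrier A. f (add A a a') = add B (f a) (f a')"
    "\<forall>r\<in>S. \<forall>a\<in>carrier A. f (smult A r a) = smult B r (f a)"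
    using assms(1) by (auto simp: tmap_def)
  then show ?thesis using assms(2-) unfolding tmap_def
  proof (intro conjI ballI)
    fix a a' assume "a \<in> carrier A'" "a' \<in> carrier A'"
    then show "f (a \<oplus>\<^bsub>A'\<^esub> a') = f a \<oplus>\<^bsub>B'\<^esub> f a'"
      using assms(2,3,6) \<open>\<forall>a\<in>carrier A. \<forall>a'\<in>carrier A. f (add A a a') = add B (f a) (f a')\<close> by auto
  next
    fix r a assume "r \<in> S" "a \<in> carrier A'"
    then show "f (r \<odot>\<^bsub>A'\<^esub> a) = r \<odot>\<^bsub>B'\<^esub> f a"
      using assms(2,4,7) \<open>\<forall>r\<in>S. \<forall>a\<in>carrier A. f (smult A r a) = smult B r (f a)\<close> by auto
  qed (use assms(5) in auto)
qed

lemma tmap_trunc_trunc_id: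
  assumes "tmod S (Y j)" "m' \<le> m"
  shows "tmap S (trunc Y m' j) (trunc Y m j) (\<lambda>y. y)"
  using assms by (auto simp: tmap_def trunc_def tmod_def)

lemma tmap_trunc_id:
  assumes "tmod S (Y j)"
  shows "tmap S (trunc Y m j) (Y j) (\<lambda>y. y)"
  using assms by (auto simp: tmap_def trunc_def tmod_def)

lemma tmap_trunc_d:
  assumes "tmap S (Y j) (Y (j - 1)) f" "tmod S (Y j)"
  shows "tmap S (trunc Y m j) (Y (j - 1)) f"
  by (rule tmap_sub[OF assms(1)]) (use assms in \<open>auto simp: trunc_gen tmap_def trunc_def tmod_def split: if_splits\<close>)

lemma cxok_trunc:
  assumes "cxok R X dX Y dY" shows "cxok R X dX (trunc Y m) dY"
proof -
  have Y: "tmod (carrier R) (Y j)" "tmap (carrier R) (Y j) (Y (j - 1)) (dY j)" "dY j \<zero>\<^bsub>Y j\<^esub> = \<zero>\<^bsub>Y (j - 1)\<^esub>"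
    "\<forall>r\<in>carrier R. r \<odot>\<^bsub>Y j\<^esub> \<zero>\<^bsub>Y j\<^esub> = \<zero>\<^bsub>Y j\<^esub>" for j
    using assms by (auto simp: cxok_def)
  have "tmap (carrier R) (trunc Y m j) (trunc Y m (j - 1)) (dY j)" for j
  proof (cases "j \<le> m")
    case True then show ?thesis using Y(2)[of j] by (simp add: tmap_def)
  next
    case False
    have z: "\<zero>\<^bsub>Y (j - 1)\<^esub> \<in> carrier (trunc Y m (j - 1))"
      using Y(1)[of "j - 1"] by (auto simp: trunc_def tmod_def)
    show ?thesis
      by (rule tmap_sub[OF Y(2)[of j]]) (use False Y(3)[of j] z Y(1)[of j] in \<open>auto simp: trunc_gen trunc_out tmod_def\<close>)
  qed
  then show ?thesis using assms tmod_trunc[OF Y(1) Y(4)]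
    by (auto simp: cxok_def trunc_gen)
qed


definition tU :: "'r ring \<Rightarrow> (int \<Rightarrow> ('r, 'a) module) \<Rightarrow> (int \<Rightarrow> 'a \<Rightarrow> 'a)
     \<Rightarrow> (int \<Rightarrow> ('r, 'b) module) \<Rightarrow> int \<Rightarrow> int \<Rightarrow> ('a, 'b) tens \<Rightarrow> ('a, 'b) tens" where
  "tU R X dX Y n i = tensor_map R (X i) (Y (n - 1 - i)) (dX (i + 1)) (\<lambda>y. y)"

definition tV :: "'r ring \<Rightarrow> (int \<Rightarrow> ('r, 'a) module)
     \<Rightarrow> (int \<Rightarrow> ('r, 'b) module) \<Rightarrow> (int \<Rightarrow> 'b \<Rightarrow> 'b) \<Rightarrow> int \<Rightarrow> int \<Rightarrow> ('a, 'b) tens \<Rightarrow> ('a, 'b) tens" where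
  "tV R X Y dY n i = tensor_map R (X i) (Y (n - 1 - i)) (\<lambda>x. x) (dY (n - i))"

definition sgnm :: "('e, 'x) monoid_scheme \<Rightarrow> int \<Rightarrow> 'e \<Rightarrow> 'e" where
  "sgnm G i c = (if even i then c else inv\<^bsub>G\<^esub> c)"

lemma tdiff_eq:
  "tdiff R X dX Y dY n f i = tU R X dX Y n i (f (i + 1)) \<otimes>\<^bsub>tcomp R X Y (n - 1) i\<^esub>
      sgnm (tcomp R X Y (n - 1) i) i (tV R X Y dY n i (f i))"
  by (simp add: tdiff_def tU_def tV_def sgnm_def Let_def)

lemma sgnm_hom: "comm_group G \<Longrightarrow> sgnm G i \<in> hom G G"
  by (rule homI) (auto simp: sgnm_def comm_group_def group.inv_closed comm_group.inv_mult)

lemma comm_swap4: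
  assumes "comm_group G" "a \<in> carrier G" "b \<in> carrier G" "c \<in> carrier G" "d \<in> carrier G"
  shows "(a \<otimes>\<^bsub>G\<^esub> b) \<otimes>\<^bsub>G\<^esub> (c \<otimes>\<^bsub>G\<^esub> d) = (a \<otimes>\<^bsub>G\<^esub> c) \<otimes>\<^bsub>G\<^esub> (b \<otimes>\<^bsub>G\<^esub> d)"
proof -
  interpret comm_group G by fact
  show ?thesis using assms by (simp add: m_ac)
qed

lemma tcomp_cg:
  assumes "cxok R X dX Y dY" shows "comm_group (tcomp R X Y n i)"
  using assms unfolding tcomp_def cxok_def by (auto intro: tensor_comm_group)

lemma tcomp_triv:
  assumes "cxok R X dX Y dY" "carrier (Y (n - i)) = {\<zero>\<^bsub>Y (n - i)\<^esub>}"
  shows "carrier (tcomp R X Y n i) = {\<one>\<^bsub>tcomp R X Y n i\<^esub>}"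
  using assms unfolding tcomp_def cxok_def by (intro tensor_trivial_carrier) auto

lemma tprod_fam: "tprod R X Y n = fam (tcomp R X Y n)"
  by (simp add: tprod_def fam_def)

lemma tsum_fam: "tsum R X Y n = (fam (tcomp R X Y n))\<lparr>carrier := fsup (tcomp R X Y n)\<rparr>"
  and tsum_carrier_fsup: "tsum_carrier R X Y n = fsup (tcomp R X Y n)"
  by (simp_all add: tsum_def tprod_def fam_def fsup_def tsum_carrier_def)

lemma tU_hom_gen:
  assumes X: "\<forall>i. tmod (carrier R) (X i)" "\<forall>i. tmap (carrier R) (X i) (X (i - 1)) (dX i)"
    and Y1: "tmod (carrier R) (Y1 (n - 1 - i))" and Y: "tmod (carrier R) (Y (n - 1 - i))"
    and m: "tmap (carrier R) (Y1 (n - 1 - i)) (Y (n - 1 - i)) (\<lambda>y. y)"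
  shows "tU R X dX Y n i \<in> hom (tcomp R X Y1 n (i + 1)) (tcomp R X Y (n - 1) i)"
proof -
  have e: "n - (i + 1) = n - 1 - i" by simp
  have dx: "tmap (carrier R) (X (i + 1)) (X i) (dX (i + 1))" using spec[OF X(2), of "i+1"] by simp
  show ?thesis unfolding tU_def tcomp_def e
    by (rule tensor_map_hom[OF spec[OF X(1)] Y1 spec[OF X(1)] Y dx m])
qed

lemma tV_hom_gen:
  assumes X: "\<forall>i. tmod (carrier R) (X i)"
    and Y1: "tmod (carrier R) (Y1 (n - i))" and Y: "tmod (carrier R) (Y (n - 1 - i))"
    and m: "tmap (carrier R) (Y1 (n - i)) (Y (n - 1 - i)) (dY (n - i))"
  shows "tV R X Y dY n i \<in> hom (tcomp R X Y1 n i) (tcomp R X Y (n - 1) i)"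
proof -
  have i: "tmap (carrier R) (X i) (X i) (\<lambda>x. x)" by (simp add: tmap_def)
  show ?thesis unfolding tV_def tcomp_def
    by (rule tensor_map_hom[OF spec[OF X] Y1 spec[OF X] Y i m])
qed

lemma tU_hom:
  assumes "cxok R X dX Y dY"
  shows "tU R X dX Y n i \<in> hom (tcomp R X Y n (i + 1)) (tcomp R X Y (n - 1) i)"
  using assms unfolding cxok_def by (intro tU_hom_gen) (auto simp: tmap_def)

lemma tV_hom:
  assumes "cxok R X dX Y dY"
  shows "tV R X Y dY n i \<in> hom (tcomp R X Y n i) (tcomp R X Y (n - 1) i)"
proof -
  have e: "n - i - 1 = n - 1 - i" by simp
  show ?thesis using assms unfolding cxok_def
    by (intro tV_hom_gen) (auto simp: e dest: spec[of _ "n - i"])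
qed

lemma tU_hom_trunc:
  assumes "cxok R X dX Y dY"
  shows "tU R X dX Y n i \<in> hom (tcomp R X (trunc Y m) n (i + 1)) (tcomp R X Y (n - 1) i)"
  using assms unfolding cxok_def
  by (intro tU_hom_gen) (auto intro: tmod_trunc tmap_trunc_id)

lemma tV_hom_trunc:
  assumes "cxok R X dX Y dY"
  shows "tV R X Y dY n i \<in> hom (tcomp R X (trunc Y m) n i) (tcomp R X Y (n - 1) i)"
proof -
  have e: "n - i - 1 = n - 1 - i" by simp
  have "tmap (carrier R) (trunc Y m (n - i)) (Y (n - i - 1)) (dY (n - i))"
    using assms unfolding cxok_def by (intro tmap_trunc_d) auto
  then show ?thesis using assms unfolding cxok_def
    by (intro tV_hom_gen) (auto simp: e intro: tmod_trunc)
qed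

lemma hom_one_cg:
  assumes "h \<in> hom G H" "comm_group G" "comm_group H"
  shows "h \<one>\<^bsub>G\<^esub> = \<one>\<^bsub>H\<^esub>"
  using assms by (simp add: comm_group_def hom_one)

lemma tdiff_in:
  assumes c: "cxok R X dX Y dY" and f: "f \<in> carrier (fam (tcomp R X Y n))"
  shows "tdiff R X dX Y dY n f i \<in> carrier (tcomp R X Y (n - 1) i)"
proof -
  let ?G = "tcomp R X Y (n - 1) i"
  interpret G: comm_group ?G by (rule tcomp_cg[OF c])
  have "tU R X dX Y n i (f (i + 1)) \<in> carrier ?G" using f by (intro hom_in_carrier[OF tU_hom[OF c]]) simp
  moreover have "tV R X Y dY n i (f i) \<in> carrier ?G" using f by (intro hom_in_carrier[OF tV_hom[OF c]]) simp
  ultimately show ?thesis unfolding tdiff_eq sgnm_def by simp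
qed

lemma tdiff_hom:
  assumes c: "cxok R X dX Y dY"
  shows "tdiff R X dX Y dY n \<in> hom (fam (tcomp R X Y n)) (fam (tcomp R X Y (n - 1)))"
proof (rule homI)
  fix f assume "f \<in> carrier (fam (tcomp R X Y n))"
  then show "tdiff R X dX Y dY n f \<in> carrier (fam (tcomp R X Y (n - 1)))"
    using tdiff_in[OF c] by simp
next
  fix f g assume f: "f \<in> carrier (fam (tcomp R X Y n))" and g: "g \<in> carrier (fam (tcomp R X Y n))"
  show "tdiff R X dX Y dY n (f \<otimes>\<^bsub>fam (tcomp R X Y n)\<^esub> g) =
        tdiff R X dX Y dY n f \<otimes>\<^bsub>fam (tcomp R X Y (n - 1))\<^esub> tdiff R X dX Y dY n g"
  proof (rule ext)
    fix i
    let ?G = "tcomp R X Y (n - 1) i"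
    interpret G: comm_group ?G by (rule tcomp_cg[OF c])
    have U: "tU R X dX Y n i \<in> hom (tcomp R X Y n (i + 1)) ?G" by (rule tU_hom[OF c])
    have V: "tV R X Y dY n i \<in> hom (tcomp R X Y n i) ?G" by (rule tV_hom[OF c])
    have S: "sgnm ?G i \<in> hom ?G ?G" by (rule sgnm_hom) (rule G.comm_group_axioms)
    have f1: "f (i + 1) \<in> carrier (tcomp R X Y n (i + 1))" "f i \<in> carrier (tcomp R X Y n i)" using f by auto
    have g1: "g (i + 1) \<in> carrier (tcomp R X Y n (i + 1))" "g i \<in> carrier (tcomp R X Y n i)" using g by auto
    have Uc: "tU R X dX Y n i (f (i + 1)) \<in> carrier ?G" "tU R X dX Y n i (g (i + 1)) \<in> carrier ?G"
      using U f1 g1 by (simp_all add: hom_in_carrier)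
    have Vc: "tV R X Y dY n i (f i) \<in> carrier ?G" "tV R X Y dY n i (g i) \<in> carrier ?G"
      using V f1 g1 by (simp_all add: hom_in_carrier)
    have Sc: "sgnm ?G i (tV R X Y dY n i (f i)) \<in> carrier ?G" "sgnm ?G i (tV R X Y dY n i (g i)) \<in> carrier ?G"
      using S Vc by (simp_all add: hom_in_carrier)
    show "tdiff R X dX Y dY n (f \<otimes>\<^bsub>fam (tcomp R X Y n)\<^esub> g) i =
        (tdiff R X dX Y dY n f \<otimes>\<^bsub>fam (tcomp R X Y (n - 1))\<^esub> tdiff R X dX Y dY n g) i"
      unfolding tdiff_eq fam_mult
      using hom_mult[OF U f1(1) g1(1)] hom_mult[OF V f1(2) g1(2)] hom_mult[OF S Vc]
        comm_swap4[OF G.comm_group_axioms Uc(1) Uc(2) Sc(1) Sc(2)] by simp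
  qed
qed

lemma tdiff_one_at:
  assumes c: "cxok R X dX Y dY" and f: "f \<in> carrier (fam (tcomp R X Y n))"
    and "f (i + 1) = \<one>\<^bsub>tcomp R X Y n (i + 1)\<^esub>" "f i = \<one>\<^bsub>tcomp R X Y n i\<^esub>"
  shows "tdiff R X dX Y dY n f i = \<one>\<^bsub>tcomp R X Y (n - 1) i\<^esub>"
proof -
  let ?G = "tcomp R X Y (n - 1) i"
  interpret G: comm_group ?G by (rule tcomp_cg[OF c])
  have "tU R X dX Y n i (f (i + 1)) = \<one>\<^bsub>?G\<^esub>"
    using assms(3) hom_one_cg[OF tU_hom[OF c] tcomp_cg[OF c] tcomp_cg[OF c]] by simp
  moreover have "tV R X Y dY n i (f i) = \<one>\<^bsub>?G\<^esub>"
    using assms(4) hom_one_cg[OF tV_hom[OF c] tcomp_cg[OF c] tcomp_cg[OF c]] by simp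
  ultimately show ?thesis unfolding tdiff_eq sgnm_def by simp
qed

lemma tdiff_fsup:
  assumes c: "cxok R X dX Y dY" and f: "f \<in> fsup (tcomp R X Y n)"
  shows "tdiff R X dX Y dY n f \<in> fsup (tcomp R X Y (n - 1))"
proof -
  have fc: "f \<in> carrier (fam (tcomp R X Y n))" and fin: "finite {i. f i \<noteq> \<one>\<^bsub>tcomp R X Y n i\<^esub>}"
    using f by (auto simp: fsup_def)
  let ?A = "{i. f i \<noteq> \<one>\<^bsub>tcomp R X Y n i\<^esub>}"
  have "{i. tdiff R X dX Y dY n f i \<noteq> \<one>\<^bsub>tcomp R X Y (n - 1) i\<^esub>} \<subseteq> ?A \<union> (\<lambda>i. i - 1) ` ?A"
  proof
    fix i assume i: "i \<in> {i. tdiff R X dX Y dY n f i \<noteq> \<one>\<^bsub>tcomp R X Y (n - 1) i\<^esub>}"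
    show "i \<in> ?A \<union> (\<lambda>i. i - 1) ` ?A"
    proof (rule ccontr)
      assume "i \<notin> ?A \<union> (\<lambda>i. i - 1) ` ?A"
      hence "f i = \<one>\<^bsub>tcomp R X Y n i\<^esub>" "f (i + 1) = \<one>\<^bsub>tcomp R X Y n (i + 1)\<^esub>"
        by (auto simp: image_iff)
      then show False using i tdiff_one_at[OF c fc] by simp
    qed
  qed
  moreover have "finite (?A \<union> (\<lambda>i. i - 1) ` ?A)" using fin by simp
  ultimately show ?thesis using tdiff_in[OF c fc]
    by (auto simp: fsup_def intro: finite_subset)
qed


lemma tmod_Y: "cxok R X dX Y dY \<Longrightarrow> tmod (carrier R) (Y j)"
  and tmod_X: "cxok R X dX Y dY \<Longrightarrow> tmod (carrier R) (X i)"
  and tmod_trunc': "cxok R X dX Y dY \<Longrightarrow> tmod (carrier R) (trunc Y m j)"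
  by (auto simp: cxok_def intro: tmod_trunc)

lemma tincl_comp_hom:
  assumes c: "cxok R X dX Y dY" and mm: "m' \<le> m"
  shows "tensor_map R (X i) (trunc Y m (n - i)) (\<lambda>x. x) (\<lambda>y. y)
     \<in> hom (tcomp R X (trunc Y m') n i) (tcomp R X (trunc Y m) n i)"
  unfolding tcomp_def
  by (rule tensor_map_hom[OF tmod_X[OF c] tmod_trunc'[OF c] tmod_X[OF c] tmod_trunc'[OF c] _
        tmap_trunc_trunc_id[OF tmod_Y[OF c] mm]]) (simp add: tmap_def)

lemma trunc_triv: "m < j \<Longrightarrow> carrier (trunc Y m j) = {\<zero>\<^bsub>trunc Y m j\<^esub>}"
  by (simp add: trunc_out)

lemma tcomp_trunc_triv:
  assumes c: "cxok R X dX Y dY" and "m < n - i"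
  shows "carrier (tcomp R X (trunc Y m) n i) = {\<one>\<^bsub>tcomp R X (trunc Y m) n i\<^esub>}"
  by (rule tcomp_triv[OF cxok_trunc[OF c]]) (use assms(2) in \<open>simp add: trunc_triv\<close>)

lemma tcomp_trunc_in:
  assumes "n - i \<le> m" shows "tcomp R X (trunc Y m) n i = tcomp R X Y n i"
  using assms by (simp add: tcomp_def)

lemma tincl_val:
  assumes c: "cxok R X dX Y dY" and mm: "m' \<le> m"
    and g: "g \<in> carrier (fam (tcomp R X (trunc Y m') n))"
  shows "tincl R X (trunc Y m) n g i = (if n - i \<le> m' then g i else \<one>\<^bsub>tcomp R X (trunc Y m) n i\<^esub>)"
proof (cases "n - i \<le> m'")
  case True
  have "trunc Y m' (n - i) = Y (n - i)" "trunc Y m (n - i) = Y (n - i)" using True mm by simp_all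
  moreover have "g i \<in> carrier (tcomp R X (trunc Y m') n i)" using g by simp
  ultimately have gi: "g i \<in> carrier (tensor_mod R (X i) (trunc Y m (n - i)))"
    by (simp add: tcomp_def)
  show ?thesis using True unfolding tincl_def
    by (simp add: tensor_map_id[OF tmod_X[OF c] tmod_trunc'[OF c] gi])
next
  case False
  have "g i = \<one>\<^bsub>tcomp R X (trunc Y m') n i\<^esub>"
    using g tcomp_trunc_triv[OF c, of m' n i] False by auto
  then show ?thesis using False unfolding tincl_def
    using hom_one_cg[OF tincl_comp_hom[OF c mm] tcomp_cg[OF cxok_trunc[OF c]] tcomp_cg[OF cxok_trunc[OF c]]]
    by simp
qed

lemma tincl_hom:
  assumes c: "cxok R X dX Y dY" and mm: "m' \<le> m"
  shows "tincl R X (trunc Y m) n \<in> hom (fam (tcomp R X (trunc Y m') n)) (fam (tcomp R X (trunc Y m) n))"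
proof (rule homI)
  fix g assume g: "g \<in> carrier (fam (tcomp R X (trunc Y m') n))"
  show "tincl R X (trunc Y m) n g \<in> carrier (fam (tcomp R X (trunc Y m) n))"
    unfolding tincl_def fam_carrier by (intro allI hom_in_carrier[OF tincl_comp_hom[OF c mm]]) (use g in simp)
next
  fix g h assume g: "g \<in> carrier (fam (tcomp R X (trunc Y m') n))" and h: "h \<in> carrier (fam (tcomp R X (trunc Y m') n))"
  show "tincl R X (trunc Y m) n (g \<otimes>\<^bsub>fam (tcomp R X (trunc Y m') n)\<^esub> h) =
         tincl R X (trunc Y m) n g \<otimes>\<^bsub>fam (tcomp R X (trunc Y m) n)\<^esub> tincl R X (trunc Y m) n h"
  proof (rule ext)
    fix i
    have "g i \<in> carrier (tcomp R X (trunc Y m') n i)" "h i \<in> carrier (tcomp R X (trunc Y m') n i)" using g h by auto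
    then show "tincl R X (trunc Y m) n (g \<otimes>\<^bsub>fam (tcomp R X (trunc Y m') n)\<^esub> h) i =
         (tincl R X (trunc Y m) n g \<otimes>\<^bsub>fam (tcomp R X (trunc Y m) n)\<^esub> tincl R X (trunc Y m) n h) i"
      unfolding tincl_def fam_mult by (rule hom_mult[OF tincl_comp_hom[OF c mm]])
  qed
qed

lemma tincl_fsup:
  assumes c: "cxok R X dX Y dY" and mm: "m' \<le> m"
    and g: "g \<in> fsup (tcomp R X (trunc Y m') n)"
  shows "tincl R X (trunc Y m) n g \<in> fsup (tcomp R X (trunc Y m) n)"
proof -
  have gc: "g \<in> carrier (fam (tcomp R X (trunc Y m') n))" and fin: "finite {i. g i \<noteq> \<one>\<^bsub>tcomp R X (trunc Y m') n i\<^esub>}"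
    using g by (auto simp: fsup_def)
  have "{i. tincl R X (trunc Y m) n g i \<noteq> \<one>\<^bsub>tcomp R X (trunc Y m) n i\<^esub>} \<subseteq> {i. g i \<noteq> \<one>\<^bsub>tcomp R X (trunc Y m') n i\<^esub>}"
  proof
    fix i assume i: "i \<in> {i. tincl R X (trunc Y m) n g i \<noteq> \<one>\<^bsub>tcomp R X (trunc Y m) n i\<^esub>}"
    show "i \<in> {i. g i \<noteq> \<one>\<^bsub>tcomp R X (trunc Y m') n i\<^esub>}"
    proof (cases "n - i \<le> m'")
      case True
      then have "tcomp R X (trunc Y m') n i = tcomp R X (trunc Y m) n i" using mm by (simp add: tcomp_def)
      then show ?thesis using i True tincl_val[OF c mm gc, of i] by simp
    next
      case False
      then show ?thesis using i tincl_val[OF c mm gc, of i] by simp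
    qed
  qed
  then show ?thesis using fin hom_in_carrier[OF tincl_hom[OF c mm] gc]
    by (auto simp: fsup_def intro: finite_subset)
qed

lemma tincl_inj:
  assumes c: "cxok R X dX Y dY" and mm: "m' \<le> m"
    and g: "g \<in> carrier (fam (tcomp R X (trunc Y m') n))" and h: "h \<in> carrier (fam (tcomp R X (trunc Y m') n))"
    and e: "tincl R X (trunc Y m) n g = tincl R X (trunc Y m) n h"
  shows "g = h"
proof
  fix i
  have ee: "tincl R X (trunc Y m) n g i = tincl R X (trunc Y m) n h i" using e by simp
  show "g i = h i"
  proof (cases "n - i \<le> m'")
    case True then show ?thesis using ee tincl_val[OF c mm g, of i] tincl_val[OF c mm h, of i] by simp
  next
    case False
    have "g i \<in> carrier (tcomp R X (trunc Y m') n i)" "h i \<in> carrier (tcomp R X (trunc Y m') n i)"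
      using g h by auto
    then show ?thesis using tcomp_trunc_triv[OF c, of m' n i] False by simp
  qed
qed

lemma tincl_tincl:
  assumes c: "cxok R X dX Y dY" and mm: "m' \<le> m" "m \<le> M"
    and g: "g \<in> carrier (fam (tcomp R X (trunc Y m') n))"
  shows "tincl R X (trunc Y M) n (tincl R X (trunc Y m) n g) = tincl R X (trunc Y M) n g"
proof
  fix i
  have g2: "tincl R X (trunc Y m) n g \<in> carrier (fam (tcomp R X (trunc Y m) n))"
    using hom_in_carrier[OF tincl_hom[OF c mm(1)] g] .
  show "tincl R X (trunc Y M) n (tincl R X (trunc Y m) n g) i = tincl R X (trunc Y M) n g i"
    unfolding tincl_val[OF c mm(2) g2] tincl_val[OF c order.trans[OF mm] g] tincl_val[OF c mm(1) g]
    using mm by (simp add: tcomp_def)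
qed

lemma trunc_mono_carrier:
  assumes "tmod S (Y j)" "m \<le> M" shows "carrier (trunc Y m j) \<subseteq> carrier (trunc Y M j)"
  using assms by (auto simp: trunc_def tmod_def)

lemma tU_hom_tt:
  assumes c: "cxok R X dX Y dY" and mm: "m \<le> M"
  shows "tU R X dX (trunc Y M) n i \<in> hom (tcomp R X (trunc Y m) n (i + 1)) (tcomp R X (trunc Y M) (n - 1) i)"
  using c unfolding cxok_def
  by (intro tU_hom_gen) (auto intro: tmod_trunc tmap_trunc_trunc_id mm)

lemma tV_hom_tt:
  assumes c: "cxok R X dX Y dY" and mm: "m \<le> M"
  shows "tV R X (trunc Y M) dY n i \<in> hom (tcomp R X (trunc Y m) n i) (tcomp R X (trunc Y M) (n - 1) i)"
proof -
  have c': "cxok R X dX (trunc Y M) dY" by (rule cxok_trunc[OF c])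
  have e: "n - i - 1 = n - 1 - i" by simp
  have t: "tmap (carrier R) (trunc Y M (n - i)) (trunc Y M (n - i - 1)) (dY (n - i))"
    using c' by (simp add: cxok_def)
  have sub: "carrier (trunc Y m (n - i)) \<subseteq> carrier (trunc Y M (n - i))"
    by (rule trunc_mono_carrier[OF tmod_Y[OF c] mm])
  have "tmap (carrier R) (trunc Y m (n - i)) (trunc Y M (n - 1 - i)) (dY (n - i))"
  proof (rule tmap_sub[OF t[unfolded e] sub])
    fix a assume "a \<in> carrier (trunc Y m (n - i))"
    then show "dY (n - i) a \<in> carrier (trunc Y M (n - 1 - i))" using t[unfolded e] sub by (auto simp: tmap_def)
  qed (simp_all add: trunc_gen)
  then show ?thesis using c unfolding cxok_def
    by (intro tV_hom_gen) (auto intro: tmod_trunc)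
qed

lemma tdiff_one_gen:
  assumes c: "cxok R X dX Y dY" and mm: "m \<le> M"
    and h: "h \<in> carrier (fam (tcomp R X (trunc Y m) n))"
    and "h (i + 1) = \<one>\<^bsub>tcomp R X (trunc Y m) n (i + 1)\<^esub>" "h i = \<one>\<^bsub>tcomp R X (trunc Y m) n i\<^esub>"
  shows "tdiff R X dX (trunc Y M) dY n h i = \<one>\<^bsub>tcomp R X (trunc Y M) (n - 1) i\<^esub>"
proof -
  have c': "cxok R X dX (trunc Y M) dY" by (rule cxok_trunc[OF c])
  let ?G = "tcomp R X (trunc Y M) (n - 1) i"
  interpret G: comm_group ?G by (rule tcomp_cg[OF c'])
  have "tU R X dX (trunc Y M) n i (h (i + 1)) = \<one>\<^bsub>?G\<^esub>"
    using assms(4) hom_one_cg[OF tU_hom_tt[OF c mm] tcomp_cg[OF cxok_trunc[OF c]] tcomp_cg[OF c']] by simp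
  moreover have "tV R X (trunc Y M) dY n i (h i) = \<one>\<^bsub>?G\<^esub>"
    using assms(5) hom_one_cg[OF tV_hom_tt[OF c mm] tcomp_cg[OF cxok_trunc[OF c]] tcomp_cg[OF c']] by simp
  ultimately show ?thesis unfolding tdiff_eq sgnm_def by simp
qed

lemma tdiff_cong_gen:
  assumes c: "cxok R X dX Y dY" and mm: "m \<le> M"
    and g: "g \<in> carrier (fam (tcomp R X (trunc Y m) n))"
    and h: "h \<in> carrier (fam (tcomp R X (trunc Y M) n))"
    and i: "n - 1 - i \<le> m"
    and e1: "h (i + 1) = g (i + 1)"
    and e2: "n - i \<le> m \<Longrightarrow> h i = g i"
    and e3: "m < n - i \<Longrightarrow> h i = \<one>\<^bsub>tcomp R X (trunc Y M) n i\<^esub>"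
  shows "tdiff R X dX (trunc Y M) dY n h i = tdiff R X dX (trunc Y m) dY n g i"
proof -
  have c': "cxok R X dX (trunc Y M) dY" by (rule cxok_trunc[OF c])
  have tr: "trunc Y m (n - 1 - i) = trunc Y M (n - 1 - i)" using i mm by simp
  have eU: "tU R X dX (trunc Y m) n i = tU R X dX (trunc Y M) n i" by (simp add: tU_def tr)
  have eV: "tV R X (trunc Y m) dY n i = tV R X (trunc Y M) dY n i" by (simp add: tV_def tr)
  have eG: "tcomp R X (trunc Y m) (n - 1) i = tcomp R X (trunc Y M) (n - 1) i"
    by (simp add: tcomp_def tr)
  have "tV R X (trunc Y M) dY n i (h i) = tV R X (trunc Y M) dY n i (g i)"
  proof (cases "n - i \<le> m")
    case True then show ?thesis using e2 by simp
  next
    case False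
    have gi: "g i = \<one>\<^bsub>tcomp R X (trunc Y m) n i\<^esub>" using g tcomp_trunc_triv[OF c, of m n i] False by auto
    show ?thesis using e3 False gi
      hom_one_cg[OF tV_hom_tt[OF c mm] tcomp_cg[OF cxok_trunc[OF c]] tcomp_cg[OF c']]
      hom_one_cg[OF tV_hom_tt[OF c order.refl] tcomp_cg[OF cxok_trunc[OF c]] tcomp_cg[OF c']]
      by simp
  qed
  then show ?thesis unfolding tdiff_eq eU eV eG e1 by simp
qed

lemma tincl_chain:
  assumes c: "cxok R X dX Y dY" and mm: "m \<le> M"
    and g: "g \<in> carrier (fam (tcomp R X (trunc Y m) n))"
  shows "tincl R X (trunc Y M) (n - 1) (tdiff R X dX (trunc Y m) dY n g)
       = tdiff R X dX (trunc Y M) dY n (tincl R X (trunc Y M) n g)"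
proof
  fix i
  have cm: "cxok R X dX (trunc Y m) dY" by (rule cxok_trunc[OF c])
  have dg: "tdiff R X dX (trunc Y m) dY n g \<in> carrier (fam (tcomp R X (trunc Y m) (n - 1)))"
    using hom_in_carrier[OF tdiff_hom[OF cm] g] .
  have hc: "tincl R X (trunc Y M) n g \<in> carrier (fam (tcomp R X (trunc Y M) n))"
    using hom_in_carrier[OF tincl_hom[OF c mm] g] .
  note tv = tincl_val[OF c mm g]
  show "tincl R X (trunc Y M) (n - 1) (tdiff R X dX (trunc Y m) dY n g) i
       = tdiff R X dX (trunc Y M) dY n (tincl R X (trunc Y M) n g) i"
  proof (cases "n - 1 - i \<le> m")
    case True
    have "tdiff R X dX (trunc Y M) dY n (tincl R X (trunc Y M) n g) i = tdiff R X dX (trunc Y m) dY n g i"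
      by (rule tdiff_cong_gen[OF c mm g hc True]) (use True in \<open>auto simp: tv\<close>)
    then show ?thesis using True by (simp add: tincl_val[OF c mm dg])
  next
    case False
    have "tdiff R X dX (trunc Y M) dY n (tincl R X (trunc Y M) n g) i = \<one>\<^bsub>tcomp R X (trunc Y M) (n - 1) i\<^esub>"
      by (rule tdiff_one_gen[OF c order.refl hc]) (use False in \<open>auto simp: tv\<close>)
    then show ?thesis using False by (simp add: tincl_val[OF c mm dg])
  qed
qed


lemma hom_restrict:
  assumes "h \<in> hom G G'" "K \<subseteq> carrier G" "h ` K \<subseteq> K'"
  shows "h \<in> hom (G\<lparr>carrier := K\<rparr>) (G'\<lparr>carrier := K'\<rparr>)"
  using assms by (auto simp: hom_def subset_iff)

lemma subgroup_restrict:
  assumes G: "group G" and H: "subgroup H G" and K: "subgroup K G" and HK: "H \<subseteq> K"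
  shows "subgroup H (G\<lparr>carrier := K\<rparr>)"
proof -
  interpret G: group G by fact
  show ?thesis
  proof
    show "H \<subseteq> carrier (G\<lparr>carrier := K\<rparr>)" using HK by simp
    show "\<And>x y. x \<in> H \<Longrightarrow> y \<in> H \<Longrightarrow> x \<otimes>\<^bsub>G\<lparr>carrier := K\<rparr>\<^esub> y \<in> H" using H by (simp add: subgroup.m_closed)
    show "\<one>\<^bsub>G\<lparr>carrier := K\<rparr>\<^esub> \<in> H" using H by (simp add: subgroup.one_closed)
    show "\<And>x. x \<in> H \<Longrightarrow> inv\<^bsub>G\<lparr>carrier := K\<rparr>\<^esub> x \<in> H"
      using H K HK by (auto simp: subgroup.m_inv_closed)
  qed
qed

lemma sys_prod_fam: "sys_prod C n = fam (\<lambda>u. C u n)"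
  by (simp add: sys_prod_def fam_def)

lemma omn_hom:
  assumes C: "\<And>u. comm_group (C u n)" and nu: "\<And>u. \<nu> u n \<in> hom (C (Suc u) n) (C u n)"
  shows "one_minus_nu C \<nu> n \<in> hom (fam (\<lambda>u. C u n)) (fam (\<lambda>u. C u n))"
proof (rule homI)
  fix x assume x: "x \<in> carrier (fam (\<lambda>u. C u n))"
  show "one_minus_nu C \<nu> n x \<in> carrier (fam (\<lambda>u. C u n))"
    unfolding one_minus_nu_def fam_carrier
  proof
    fix u
    interpret Cu: comm_group "C u n" by (rule C)
    have "\<nu> u n (x (Suc u)) \<in> carrier (C u n)" using x by (intro hom_in_carrier[OF nu]) simp
    then show "x u \<otimes>\<^bsub>C u n\<^esub> inv\<^bsub>C u n\<^esub> \<nu> u n (x (Suc u)) \<in> carrier (C u n)" using x by simp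
  qed
next
  fix x y assume x: "x \<in> carrier (fam (\<lambda>u. C u n))" and y: "y \<in> carrier (fam (\<lambda>u. C u n))"
  show "one_minus_nu C \<nu> n (x \<otimes>\<^bsub>fam (\<lambda>u. C u n)\<^esub> y) =
        one_minus_nu C \<nu> n x \<otimes>\<^bsub>fam (\<lambda>u. C u n)\<^esub> one_minus_nu C \<nu> n y"
    unfolding one_minus_nu_def fam_mult
  proof (rule ext)
    fix u
    interpret Cu: comm_group "C u n" by (rule C)
    have a: "\<nu> u n (x (Suc u)) \<in> carrier (C u n)" "\<nu> u n (y (Suc u)) \<in> carrier (C u n)"
      using x y by (auto intro: hom_in_carrier[OF nu])
    have b: "\<nu> u n (x (Suc u) \<otimes>\<^bsub>C (Suc u) n\<^esub> y (Suc u)) = \<nu> u n (x (Suc u)) \<otimes>\<^bsub>C u n\<^esub> \<nu> u n (y (Suc u))"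
      using x y by (intro hom_mult[OF nu]) auto
    have xu: "x u \<in> carrier (C u n)" "y u \<in> carrier (C u n)" using x y by auto
    show "x u \<otimes>\<^bsub>C u n\<^esub> y u \<otimes>\<^bsub>C u n\<^esub> inv\<^bsub>C u n\<^esub> \<nu> u n (x (Suc u) \<otimes>\<^bsub>C (Suc u) n\<^esub> y (Suc u)) =
          x u \<otimes>\<^bsub>C u n\<^esub> inv\<^bsub>C u n\<^esub> \<nu> u n (x (Suc u)) \<otimes>\<^bsub>C u n\<^esub> (y u \<otimes>\<^bsub>C u n\<^esub> inv\<^bsub>C u n\<^esub> \<nu> u n (y (Suc u)))"
      unfolding b using a xu by (simp add: Cu.inv_mult Cu.m_ac)
  qed
qed

lemma kernel_subgroup_cg:
  assumes "comm_group G" "comm_group H" "h \<in> hom G H"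
  shows "subgroup (kernel G H h) G"
  by (rule group_hom.subgroup_kernel) (use assms in \<open>auto simp: group_hom_def group_hom_axioms_def comm_group_def\<close>)

lemma lim_grp_eq:
  "lim_grp C \<nu> n = (fam (\<lambda>u. C u n))\<lparr>carrier := kernel (fam (\<lambda>u. C u n)) (fam (\<lambda>u. C u n)) (one_minus_nu C \<nu> n)\<rparr>"
  by (simp add: lim_grp_def sys_prod_fam kernel_def)

locale tsetting =
  fixes R :: "'r ring" and X :: "int \<Rightarrow> ('r, 'a) module" and dX :: "int \<Rightarrow> 'a \<Rightarrow> 'a"
    and Y :: "int \<Rightarrow> ('r, 'b) module" and dY :: "int \<Rightarrow> 'b \<Rightarrow> 'b" and k :: int
  assumes c: "cxok R X dX Y dY" and z: "zeroabove Y k"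
begin

abbreviation "tT n \<equiv> tcomp R X Y n"
abbreviation "tP n \<equiv> fam (tT n)"
abbreviation "tS n \<equiv> (fam (tT n))\<lparr>carrier := fsup (tT n)\<rparr>"
abbreviation "tD n \<equiv> tdiff R X dX Y dY n"

definition Lm :: "int \<Rightarrow> int \<Rightarrow> (int \<Rightarrow> ('a, 'b) tens) set" where
  "Lm m n = {f \<in> fsup (tT n). \<forall>i. m < n - i \<longrightarrow> f i = \<one>\<^bsub>tT n i\<^esub>}"

lemma cgT: "comm_group (tT n i)" by (rule tcomp_cg[OF c])

lemma trivT: "k < n - i \<Longrightarrow> carrier (tT n i) = {\<one>\<^bsub>tT n i\<^esub>}"
  by (rule tcomp_triv[OF c]) (use z in \<open>simp add: zeroabove_def\<close>)

lemma cgP: "comm_group (tP n)" by (rule fam_comm_group[OF cgT])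

lemma fsup_sub: "subgroup (fsup (tT n)) (tP n)" by (rule fsup_subgroup[OF cgT])

lemma cgS: "comm_group (tS n)" by (rule sub_comm_group[OF cgP fsup_sub])

lemma gS: "group (tS n)" using cgS by (simp add: comm_group_def)
lemma gP: "group (tP n)" using cgP by (simp add: comm_group_def)

lemma invP: "f \<in> carrier (tP n) \<Longrightarrow> inv\<^bsub>tP n\<^esub> f = (\<lambda>i. inv\<^bsub>tT n i\<^esub> (f i))"
  by (rule fam_inv[OF cgT])

lemma invS: "f \<in> fsup (tT n) \<Longrightarrow> inv\<^bsub>tS n\<^esub> f = (\<lambda>i. inv\<^bsub>tT n i\<^esub> (f i))"
proof -
  assume f: "f \<in> fsup (tT n)"
  have "inv\<^bsub>tS n\<^esub> f = inv\<^bsub>tP n\<^esub> f" using group.m_inv_consistent[OF gP fsup_sub f] .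
  also have "\<dots> = (\<lambda>i. inv\<^bsub>tT n i\<^esub> (f i))" using f by (intro invP) (simp add: fsup_def)
  finally show ?thesis .
qed

lemma fsup_carrier: "f \<in> fsup (tT n) \<Longrightarrow> f i \<in> carrier (tT n i)"
  by (simp add: fsup_def)

lemma Lm_subP: "subgroup (Lm m n) (tP n)"
  unfolding Lm_def by (rule fsup_subgroup_cond[OF cgT])

lemma Lm_fsup: "Lm m n \<subseteq> fsup (tT n)" by (auto simp: Lm_def)

lemma Lm_subS: "subgroup (Lm m n) (tS n)"
  by (rule subgroup_restrict[OF gP Lm_subP fsup_sub Lm_fsup])

lemma Lm_normal: "Lm m n \<lhd> tS n"
  by (rule comm_group.subgroup_imp_normal[OF cgS Lm_subS])

lemma Lm_mono: "m \<le> m' \<Longrightarrow> Lm m n \<subseteq> Lm m' n"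
  by (auto simp: Lm_def)

lemma Lm_agree:
  assumes a: "a \<in> fsup (tT n)" and b: "b \<in> fsup (tT n)"
  shows "Lm m n #>\<^bsub>tS n\<^esub> a = Lm m n #>\<^bsub>tS n\<^esub> b \<longleftrightarrow> (\<forall>i. m < n - i \<longrightarrow> a i = b i)"
proof -
  interpret S: comm_group "tS n" by (rule cgS)
  interpret L: subgroup "Lm m n" "tS n" by (rule Lm_subS)
  have ac: "a \<in> carrier (tS n)" "b \<in> carrier (tS n)" using a b by simp_all
  have ab: "a \<otimes>\<^bsub>tS n\<^esub> inv\<^bsub>tS n\<^esub> b = (\<lambda>i. a i \<otimes>\<^bsub>tT n i\<^esub> inv\<^bsub>tT n i\<^esub> (b i))"
    using b by (simp add: invS)
  have abc: "a \<otimes>\<^bsub>tS n\<^esub> inv\<^bsub>tS n\<^esub> b \<in> fsup (tT n)" using S.m_closed[OF ac(1) S.inv_closed[OF ac(2)]] by simp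
  have pt: "a i \<otimes>\<^bsub>tT n i\<^esub> inv\<^bsub>tT n i\<^esub> (b i) = \<one>\<^bsub>tT n i\<^esub> \<longleftrightarrow> a i = b i" for i
  proof -
    interpret Ti: comm_group "tT n i" by (rule cgT)
    show ?thesis using fsup_carrier[OF a, of i] fsup_carrier[OF b, of i]
      by (simp add: Ti.inv_solve_right')
  qed
  have "Lm m n #>\<^bsub>tS n\<^esub> a = Lm m n #>\<^bsub>tS n\<^esub> b \<longleftrightarrow> a \<otimes>\<^bsub>tS n\<^esub> inv\<^bsub>tS n\<^esub> b \<in> Lm m n"
  proof
    assume "Lm m n #>\<^bsub>tS n\<^esub> a = Lm m n #>\<^bsub>tS n\<^esub> b"
    then have "a \<in> Lm m n #>\<^bsub>tS n\<^esub> b" using S.rcos_self[OF ac(1) L.subgroup_axioms] by simp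
    then show "a \<otimes>\<^bsub>tS n\<^esub> inv\<^bsub>tS n\<^esub> b \<in> Lm m n" using L.rcos_module_imp[OF S.is_group ac(2)] by blast
  next
    assume "a \<otimes>\<^bsub>tS n\<^esub> inv\<^bsub>tS n\<^esub> b \<in> Lm m n"
    then have "a \<in> Lm m n #>\<^bsub>tS n\<^esub> b" using L.rcos_module_rev[OF S.is_group ac(2) ac(1)] by blast
    then show "Lm m n #>\<^bsub>tS n\<^esub> a = Lm m n #>\<^bsub>tS n\<^esub> b"
      using S.repr_independence[OF _ ac(2) L.subgroup_axioms] by simp
  qed
  also have "\<dots> \<longleftrightarrow> (\<forall>i. m < n - i \<longrightarrow> a i = b i)"
    using abc unfolding Lm_def ab by (simp add: pt)
  finally show ?thesis .
qed

lemma Lm_top: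
  assumes "k \<le> m" shows "Lm m n = fsup (tT n)"
proof -
  have "x i = \<one>\<^bsub>tT n i\<^esub>" if "x \<in> fsup (tT n)" "m < n - i" for x i
    using fsup_carrier[OF that(1), of i] trivT[of n i] that(2) assms by simp
  then show ?thesis by (auto simp: Lm_def)
qed

lemma Y_trunc_k: "trunc Y k = Y" by (rule trunc_top[OF z order.refl])

lemma tsub_eq:
  assumes mk: "m \<le> k"
  shows "tsub R X Y m n = Lm m n"
proof -
  have e: "tsub R X Y m n = tincl R X (trunc Y k) n ` fsup (tcomp R X (trunc Y m) n)"
    by (simp add: tsub_def tsum_carrier_fsup Y_trunc_k)
  show ?thesis unfolding e
  proof
    show "tincl R X (trunc Y k) n ` fsup (tcomp R X (trunc Y m) n) \<subseteq> Lm m n"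
    proof
      fix f assume "f \<in> tincl R X (trunc Y k) n ` fsup (tcomp R X (trunc Y m) n)"
      then obtain g where g: "g \<in> fsup (tcomp R X (trunc Y m) n)" "f = tincl R X (trunc Y k) n g" by blast
      have gc: "g \<in> carrier (fam (tcomp R X (trunc Y m) n))" using g by (simp add: fsup_def)
      have "f \<in> fsup (tT n)" using tincl_fsup[OF c mk g(1)] g(2) by (simp add: Y_trunc_k)
      moreover have "\<forall>i. m < n - i \<longrightarrow> f i = \<one>\<^bsub>tT n i\<^esub>"
        using g(2) tincl_val[OF c mk gc] by (simp add: Y_trunc_k)
      ultimately show "f \<in> Lm m n" by (simp add: Lm_def)
    qed
  next
    show "Lm m n \<subseteq> tincl R X (trunc Y k) n ` fsup (tcomp R X (trunc Y m) n)"
    proof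
      fix f assume f: "f \<in> Lm m n"
      define g where "g = (\<lambda>i. if n - i \<le> m then f i else \<one>\<^bsub>tcomp R X (trunc Y m) n i\<^esub>)"
      have fs: "f \<in> fsup (tT n)" using f by (simp add: Lm_def)
      have gc: "g \<in> carrier (fam (tcomp R X (trunc Y m) n))"
      proof (simp, intro allI)
        fix i show "g i \<in> carrier (tcomp R X (trunc Y m) n i)"
        proof (cases "n - i \<le> m")
          case True then show ?thesis using fsup_carrier[OF fs, of i] by (simp add: g_def tcomp_def)
        next
          case False
          interpret Ti: comm_group "tcomp R X (trunc Y m) n i" by (rule tcomp_cg[OF cxok_trunc[OF c]])
          show ?thesis using False by (simp add: g_def)
        qed
      qed
      have "{i. g i \<noteq> \<one>\<^bsub>tcomp R X (trunc Y m) n i\<^esub>} \<subseteq> {i. f i \<noteq> \<one>\<^bsub>tT n i\<^esub>}"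
        by (auto simp: g_def tcomp_def split: if_splits)
      then have gs: "g \<in> fsup (tcomp R X (trunc Y m) n)" using gc fs by (auto simp: fsup_def intro: finite_subset)
      have "tincl R X (trunc Y k) n g = f"
      proof
        fix i show "tincl R X (trunc Y k) n g i = f i"
          using f tincl_val[OF c mk gc, of i] by (auto simp: g_def Lm_def Y_trunc_k)
      qed
      then show "f \<in> tincl R X (trunc Y k) n ` fsup (tcomp R X (trunc Y m) n)" using gs by blast
    qed
  qed
qed

lemma tsum_eq: "tsum R X Y n = tS n" by (simp add: tsum_fam)
lemma tprod_eq: "tprod R X Y n = tP n" by (simp add: tprod_fam)

lemma D_homP: "tD n \<in> hom (tP n) (tP (n - 1))" by (rule tdiff_hom[OF c])

lemma D_homS: "tD n \<in> hom (tS n) (tS (n - 1))"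
proof (rule hom_restrict[OF D_homP])
  show "fsup (tT n) \<subseteq> carrier (tP n)" by (auto simp: fsup_def)
  show "tD n ` fsup (tT n) \<subseteq> fsup (tT (n - 1))" using tdiff_fsup[OF c] by blast
qed

lemma D_Lm: "tD n ` Lm m n \<subseteq> Lm m (n - 1)"
proof
  fix y assume "y \<in> tD n ` Lm m n"
  then obtain h where h: "h \<in> Lm m n" "y = tD n h" by blast
  have hs: "h \<in> fsup (tT n)" and hc: "h \<in> carrier (tP n)" using h by (auto simp: Lm_def fsup_def)
  have "y \<in> fsup (tT (n - 1))" using h tdiff_fsup[OF c hs] by simp
  moreover have "y i = \<one>\<^bsub>tT (n - 1) i\<^esub>" if "m < n - 1 - i" for i
    using h that tdiff_one_at[OF c hc, of i] by (auto simp: Lm_def)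
  ultimately show "y \<in> Lm m (n - 1)" by (simp add: Lm_def)
qed

lemma tdiff_local:
  "f (i + 1) = g (i + 1) \<Longrightarrow> f i = g i \<Longrightarrow> tdiff R X dX Y' dY n f i = tdiff R X dX Y' dY n g i"
  by (simp add: tdiff_def)

end


context tsetting begin

definition trn :: "nat \<Rightarrow> int \<Rightarrow> (int \<Rightarrow> ('a, 'b) tens) \<Rightarrow> (int \<Rightarrow> ('a, 'b) tens)" where
  "trn u n f = (\<lambda>i. if i < n - k + int u then f i else \<one>\<^bsub>tT n i\<^esub>)"

definition Phi1 :: "int \<Rightarrow> (int \<Rightarrow> ('a, 'b) tens) \<Rightarrow> nat \<Rightarrow> (int \<Rightarrow> ('a, 'b) tens) set" where
  "Phi1 n f = (\<lambda>u. Lm (k - int u) n #>\<^bsub>tS n\<^esub> trn u n f)"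

abbreviation "tQ u n \<equiv> tS n Mod Lm (k - int u) n"

lemma qsys_eq: "qsys R X Y k u n = tQ u n"
  by (simp add: qsys_def quot_grp_def tsum_eq tsub_eq)

lemma gQ: "group (tQ u n)" by (rule normal.factorgroup_is_group[OF Lm_normal])
lemma cgQ: "comm_group (tQ u n)" by (rule comm_group.abelian_FactGroup[OF cgS Lm_subS])

lemma P_low: "f \<in> carrier (tP n) \<Longrightarrow> i < n - k \<Longrightarrow> f i = \<one>\<^bsub>tT n i\<^esub>"
  using trivT[of n i] by auto

lemma trn_fsup:
  assumes f: "f \<in> carrier (tP n)" shows "trn u n f \<in> fsup (tT n)"
proof -
  interpret P: comm_group "tP n" by (rule cgP)
  have "trn u n f \<in> carrier (tP n)" using f by (auto simp: trn_def intro: monoid.one_closed comm_group.axioms cgT group.is_monoid)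
  moreover have "{i. trn u n f i \<noteq> \<one>\<^bsub>tT n i\<^esub>} \<subseteq> {n - k..<n - k + int u}"
    using P_low[OF f] by (auto simp: trn_def split: if_splits)
  ultimately show ?thesis by (auto simp: fsup_def intro: finite_subset)
qed

lemma trn_hom: "trn u n \<in> hom (tP n) (tS n)"
proof (rule homI)
  fix f assume "f \<in> carrier (tP n)" then show "trn u n f \<in> carrier (tS n)" using trn_fsup by simp
next
  fix f g assume "f \<in> carrier (tP n)" "g \<in> carrier (tP n)"
  have o: "\<one>\<^bsub>tT n i\<^esub> \<otimes>\<^bsub>tT n i\<^esub> \<one>\<^bsub>tT n i\<^esub> = \<one>\<^bsub>tT n i\<^esub>" for i
  proof -
    interpret Ti: comm_group "tT n i" by (rule cgT)
    show ?thesis by simp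
  qed
  show "trn u n (f \<otimes>\<^bsub>tP n\<^esub> g) = trn u n f \<otimes>\<^bsub>tS n\<^esub> trn u n g"
    by (rule ext) (simp add: trn_def o)
qed

lemma qnu_eq:
  assumes a: "a \<in> fsup (tT n)"
  shows "qsys_nu R X Y k u n (Lm (k - int (Suc u)) n #>\<^bsub>tS n\<^esub> a) = Lm (k - int u) n #>\<^bsub>tS n\<^esub> a"
proof -
  have sub: "(\<lambda>x. x) ` Lm (k - int (Suc u)) n \<subseteq> Lm (k - int u) n" using Lm_mono[of "k - int (Suc u)" "k - int u"] by auto
  have "(\<lambda>x. x) \<in> hom (tS n) (tS n)" by (rule homI) auto
  from quot_map(2)[OF gS gS Lm_subS Lm_normal Lm_normal this sub, of a] a
  show ?thesis by (simp add: qsys_nu_def tsub_eq tsum_eq)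
qed

lemma qnu_hom: "qsys_nu R X Y k u n \<in> hom (tQ (Suc u) n) (tQ u n)"
proof -
  have sub: "(\<lambda>x. x) ` Lm (k - int (Suc u)) n \<subseteq> Lm (k - int u) n" using Lm_mono[of "k - int (Suc u)" "k - int u"] by auto
  have "(\<lambda>x. x) \<in> hom (tS n) (tS n)" by (rule homI) auto
  note q = quot_map(1)[OF gS gS Lm_subS Lm_normal Lm_normal this sub]
  have e: "qsys_nu R X Y k u n = (\<lambda>S. Lm (k - int u) n #>\<^bsub>tS n\<^esub> (SOME x. x \<in> S))"
    by (simp add: qsys_nu_def tsub_eq tsum_eq fun_eq_iff)
  show ?thesis unfolding e by (rule q)
qed

abbreviation "tL n \<equiv> lim_grp (qsys R X Y k) (qsys_nu R X Y k) n"
abbreviation "tF n \<equiv> fam (\<lambda>u. qsys R X Y k u n)"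

lemma omn_homQ: "one_minus_nu (qsys R X Y k) (qsys_nu R X Y k) n \<in> hom (tF n) (tF n)"
proof (rule omn_hom)
  show "\<And>u. comm_group (qsys R X Y k u n)" by (simp add: qsys_eq cgQ)
  show "\<And>u. qsys_nu R X Y k u n \<in> hom (qsys R X Y k (Suc u) n) (qsys R X Y k u n)"
    unfolding qsys_eq by (rule qnu_hom)
qed

lemma cgF: "comm_group (tF n)" by (rule fam_comm_group) (simp add: qsys_eq cgQ)

lemma tL_eq: "tL n = (tF n)\<lparr>carrier := kernel (tF n) (tF n) (one_minus_nu (qsys R X Y k) (qsys_nu R X Y k) n)\<rparr>"
  by (rule lim_grp_eq)

lemma gL: "group (tL n)"
  unfolding tL_eq
  by (rule subgroup.subgroup_is_group[OF kernel_subgroup_cg[OF cgF cgF omn_homQ]])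
     (use cgF in \<open>simp add: comm_group_def\<close>)

lemma trn_agree: "k - int u < n - i \<Longrightarrow> trn (Suc u) n f i = trn u n f i"
  by (simp add: trn_def)

lemma Phi1_in:
  assumes f: "f \<in> carrier (tP n)" shows "Phi1 n f \<in> carrier (tL n)"
proof -
  have inQ: "Phi1 n f u \<in> carrier (tQ u n)" for u
    using trn_fsup[OF f] by (auto simp: Phi1_def carrier_FactGroup)
  have nu: "qsys_nu R X Y k u n (Phi1 n f (Suc u)) = Phi1 n f u" for u
  proof -
    have "qsys_nu R X Y k u n (Phi1 n f (Suc u)) = Lm (k - int u) n #>\<^bsub>tS n\<^esub> trn (Suc u) n f"
      unfolding Phi1_def by (rule qnu_eq[OF trn_fsup[OF f]])
    also have "\<dots> = Phi1 n f u" unfolding Phi1_def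
      using Lm_agree[OF trn_fsup[OF f] trn_fsup[OF f]] trn_agree by blast
    finally show ?thesis .
  qed
  have "one_minus_nu (qsys R X Y k) (qsys_nu R X Y k) n (Phi1 n f) = \<one>\<^bsub>tF n\<^esub>"
  proof (rule ext)
    fix u
    interpret Q: group "tQ u n" by (rule gQ)
    show "one_minus_nu (qsys R X Y k) (qsys_nu R X Y k) n (Phi1 n f) u = \<one>\<^bsub>tF n\<^esub> u"
      unfolding one_minus_nu_def fam_one qsys_eq nu by (rule Q.r_inv[OF inQ])
  qed
  then show ?thesis unfolding tL_eq kernel_def using inQ by (simp add: qsys_eq)
qed

lemma Phi1_hom: "Phi1 n \<in> hom (tP n) (tL n)"
proof (rule homI)
  fix f assume "f \<in> carrier (tP n)" then show "Phi1 n f \<in> carrier (tL n)" by (rule Phi1_in)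
next
  fix f g assume f: "f \<in> carrier (tP n)" and g: "g \<in> carrier (tP n)"
  show "Phi1 n (f \<otimes>\<^bsub>tP n\<^esub> g) = Phi1 n f \<otimes>\<^bsub>tL n\<^esub> Phi1 n g"
  proof (rule ext)
    fix u
    interpret N: normal "Lm (k - int u) n" "tS n" by (rule Lm_normal)
    have m: "trn u n (f \<otimes>\<^bsub>tP n\<^esub> g) = trn u n f \<otimes>\<^bsub>tS n\<^esub> trn u n g" using f g by (rule hom_mult[OF trn_hom])
    have rs: "(Lm (k - int u) n #>\<^bsub>tS n\<^esub> trn u n f) <#>\<^bsub>tS n\<^esub> (Lm (k - int u) n #>\<^bsub>tS n\<^esub> trn u n g)
      = Lm (k - int u) n #>\<^bsub>tS n\<^esub> (trn u n f \<otimes>\<^bsub>tS n\<^esub> trn u n g)"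
      by (rule N.rcos_sum) (use trn_fsup[OF f] trn_fsup[OF g] in simp_all)
    show "Phi1 n (f \<otimes>\<^bsub>tP n\<^esub> g) u = (Phi1 n f \<otimes>\<^bsub>tL n\<^esub> Phi1 n g) u"
      unfolding Phi1_def tL_eq fam_mult qsys_eq mult_FactGroup using rs m by simp
  qed
qed

lemma Phi1_iso: "Phi1 n \<in> iso (tP n) (tL n)"
proof -
  interpret gh: group_hom "tP n" "tL n" "Phi1 n"
    using gP gL Phi1_hom by (simp add: group_hom_def group_hom_axioms_def)
  show ?thesis unfolding gh.iso_iff
  proof (intro conjI subsetI ballI impI)
    fix f assume f: "f \<in> carrier (tP n)" and e: "Phi1 n f = \<one>\<^bsub>tL n\<^esub>"
    show "f = \<one>\<^bsub>tP n\<^esub>"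
    proof (rule ext)
      fix i
      define u where "u = nat (i - (n - k)) + 1"
      have iu: "i < n - k + int u" by (simp add: u_def)
      have c1: "Lm (k - int u) n #>\<^bsub>tS n\<^esub> \<one>\<^bsub>tS n\<^esub> = Lm (k - int u) n"
        by (rule group.coset_mult_one[OF gS subgroup.subset[OF Lm_subS]])
      have "Lm (k - int u) n #>\<^bsub>tS n\<^esub> trn u n f = Lm (k - int u) n #>\<^bsub>tS n\<^esub> \<one>\<^bsub>tS n\<^esub>"
        using e fun_cong[OF e, of u] c1 unfolding Phi1_def tL_eq
        by (simp add: qsys_eq)
      then have "\<forall>i. k - int u < n - i \<longrightarrow> trn u n f i = \<one>\<^bsub>tT n i\<^esub>"
        using Lm_agree[OF trn_fsup[OF f], of "\<one>\<^bsub>tS n\<^esub>"] subgroup.one_closed[OF fsup_sub] by simp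
      then show "f i = \<one>\<^bsub>tP n\<^esub> i" using iu by (simp add: trn_def)
    qed
  next
    fix x assume x: "x \<in> carrier (tL n)"
    have xu: "x u \<in> carrier (tQ u n)" for u using x by (simp add: tL_eq kernel_def qsys_eq)
    have xk: "one_minus_nu (qsys R X Y k) (qsys_nu R X Y k) n x = \<one>\<^bsub>tF n\<^esub>" using x by (simp add: tL_eq kernel_def)
    define r where "r u = (SOME y. y \<in> x u)" for u
    have r: "r u \<in> fsup (tT n) \<and> x u = Lm (k - int u) n #>\<^bsub>tS n\<^esub> r u" for u
    proof -
      obtain a where a: "a \<in> fsup (tT n)" "x u = Lm (k - int u) n #>\<^bsub>tS n\<^esub> a"
        using xu[of u] by (auto simp: carrier_FactGroup)
      have "a \<in> x u" using a group.rcos_self[OF gS _ Lm_subS] by simp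
      then have ru: "r u \<in> x u" unfolding r_def by (rule someI[of "\<lambda>y. y \<in> x u"])
      then have rf: "r u \<in> fsup (tT n)"
        using a subgroup.elemrcos_carrier[OF Lm_subS gS] by (metis partial_object.select_convs(1) partial_object.surjective partial_object.update_convs(1))
      have "Lm (k - int u) n #>\<^bsub>tS n\<^esub> a = Lm (k - int u) n #>\<^bsub>tS n\<^esub> r u"
        using group.repr_independence[OF gS _ _ Lm_subS] ru a by simp
      then show ?thesis using rf a by simp
    qed
    have step: "Lm (k - int u) n #>\<^bsub>tS n\<^esub> r u = Lm (k - int u) n #>\<^bsub>tS n\<^esub> r (Suc u)" for u
    proof -
      interpret Q: group "tQ u n" by (rule gQ)
      have nuc: "qsys_nu R X Y k u n (x (Suc u)) \<in> carrier (tQ u n)"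
        using hom_in_carrier[OF qnu_hom xu] .
      have "x u \<otimes>\<^bsub>tQ u n\<^esub> inv\<^bsub>tQ u n\<^esub> qsys_nu R X Y k u n (x (Suc u)) = \<one>\<^bsub>tQ u n\<^esub>"
        using fun_cong[OF xk, of u] by (simp add: one_minus_nu_def qsys_eq)
      then have "x u = \<one>\<^bsub>tQ u n\<^esub> \<otimes>\<^bsub>tQ u n\<^esub> qsys_nu R X Y k u n (x (Suc u))"
        by (rule iffD1[OF Q.inv_solve_right'[OF Q.one_closed xu[of u] nuc]])
      then have "x u = qsys_nu R X Y k u n (x (Suc u))" using Q.l_one[OF nuc] by (rule trans)
      also have "\<dots> = Lm (k - int u) n #>\<^bsub>tS n\<^esub> r (Suc u)"
        using r[of "Suc u"] qnu_eq[of "r (Suc u)" n u] by simp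
      finally show ?thesis using r[of u] by simp
    qed
    have agr: "r (u + d) i = r u i" if "i < n - k + int u" for u d i
    proof (induction d)
      case (Suc d)
      have "r (Suc (u + d)) i = r (u + d) i"
        using step[of "u + d"] Lm_agree[OF conjunct1[OF r[of "u + d"]] conjunct1[OF r[of "Suc (u + d)"]]] that
        by auto
      then show ?case using Suc by simp
    qed simp
    define f where "f i = r (nat (i - (n - k)) + 1) i" for i
    have fc: "f \<in> carrier (tP n)" using r by (simp add: f_def fsup_carrier)
    have "Phi1 n f = x"
    proof (rule ext)
      fix u
      have "\<forall>i. k - int u < n - i \<longrightarrow> trn u n f i = r u i"
      proof (intro allI impI)
        fix i assume i: "k - int u < n - i"
        show "trn u n f i = r u i"
        proof (cases "i < n - k")
          case True
          then show ?thesis using i P_low[OF fc True] trivT[of n i] fsup_carrier[OF conjunct1[OF r[of u]], of i]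
            by (simp add: trn_def)
        next
          case False
          define w where "w = nat (i - (n - k)) + 1"
          have wle: "w \<le> u" and wi: "i < n - k + int w" using i False by (simp_all add: w_def)
          have "r (w + (u - w)) i = r w i" by (rule agr[OF wi])
          then have "r u i = r w i" using wle by simp
          moreover have "i < n - k + int u" using i by simp
          ultimately show ?thesis by (simp add: trn_def f_def w_def)
        qed
      qed
      then have "Lm (k - int u) n #>\<^bsub>tS n\<^esub> trn u n f = Lm (k - int u) n #>\<^bsub>tS n\<^esub> r u"
        using Lm_agree[OF trn_fsup[OF fc] conjunct1[OF r[of u]]] by simp
      then show "Phi1 n f u = x u" using r[of u] by (simp add: Phi1_def)
    qed
    then show "x \<in> Phi1 n ` carrier (tP n)" using fc by blast
  qed
qed

lemma Phi1_comm:
  assumes f: "f \<in> carrier (tP n)"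
  shows "Phi1 (n - 1) (tD n f) = sys_prod_diff (qsys_diff R X dX Y dY k) n (Phi1 n f)"
proof (rule ext)
  fix u
  have Df: "tD n f \<in> carrier (tP (n - 1))" using hom_in_carrier[OF D_homP f] .
  have a: "trn u n f \<in> carrier (tS n)" using trn_fsup[OF f] by simp
  have "sys_prod_diff (qsys_diff R X dX Y dY k) n (Phi1 n f) u
      = Lm (k - int u) (n - 1) #>\<^bsub>tS (n - 1)\<^esub> tD n (SOME x. x \<in> Lm (k - int u) n #>\<^bsub>tS n\<^esub> trn u n f)"
    by (simp add: sys_prod_diff_def qsys_diff_def quot_diff_def Phi1_def tsum_eq tsub_eq)
  also have "\<dots> = Lm (k - int u) (n - 1) #>\<^bsub>tS (n - 1)\<^esub> tD n (trn u n f)"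
    by (rule quot_map(2)[OF gS gS Lm_subS Lm_normal Lm_normal D_homS D_Lm a])
  also have "\<dots> = Lm (k - int u) (n - 1) #>\<^bsub>tS (n - 1)\<^esub> trn u (n - 1) (tD n f)"
  proof -
    have "\<forall>i. k - int u < n - 1 - i \<longrightarrow> tD n (trn u n f) i = trn u (n - 1) (tD n f) i"
      by (auto simp: trn_def intro!: tdiff_local)
    then show ?thesis
      using Lm_agree[OF hom_in_carrier[OF D_homS a, simplified] trn_fsup[OF Df]] by simp
  qed
  finally show "Phi1 (n - 1) (tD n f) u = sys_prod_diff (qsys_diff R X dX Y dY k) n (Phi1 n f) u"
    by (simp add: Phi1_def)
qed

theorem part1: "cx_iso (tprod R X Y) (tdiff R X dX Y dY)
           (lim_grp (qsys R X Y k) (qsys_nu R X Y k))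
           (sys_prod_diff (qsys_diff R X dX Y dY k))"
  unfolding cx_iso_def
  by (rule exI[of _ Phi1]) (use Phi1_iso Phi1_comm in \<open>simp add: tprod_eq\<close>)

end


declare of_nat_Suc [simp del]

lemma inv_fsup_gen:
  assumes c: "cxok R X dX Y' dY" and g: "g \<in> fsup (tcomp R X Y' n)"
  shows "inv\<^bsub>(fam (tcomp R X Y' n))\<lparr>carrier := fsup (tcomp R X Y' n)\<rparr>\<^esub> g = (\<lambda>i. inv\<^bsub>tcomp R X Y' n i\<^esub> (g i))"
proof -
  have cg: "\<And>i. comm_group (tcomp R X Y' n i)" by (rule tcomp_cg[OF c])
  have gp: "group (fam (tcomp R X Y' n))" using fam_comm_group[of "tcomp R X Y' n", OF cg] by (simp add: comm_group_def)
  have "inv\<^bsub>(fam (tcomp R X Y' n))\<lparr>carrier := fsup (tcomp R X Y' n)\<rparr>\<^esub> g = inv\<^bsub>fam (tcomp R X Y' n)\<^esub> g"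
    using group.m_inv_consistent[OF gp fsup_subgroup[OF cg] g] .
  also have "\<dots> = (\<lambda>i. inv\<^bsub>tcomp R X Y' n i\<^esub> (g i))" using g by (intro fam_inv[OF cg]) (simp add: fsup_def)
  finally show ?thesis .
qed

lemma coset_eq_by_diff:
  assumes "group G" "subgroup H G" "a \<in> carrier G" "b \<in> carrier G" "a \<otimes>\<^bsub>G\<^esub> inv\<^bsub>G\<^esub> b \<in> H"
  shows "H #>\<^bsub>G\<^esub> a = H #>\<^bsub>G\<^esub> b"
proof -
  interpret G: group G by fact
  have "a \<in> H #>\<^bsub>G\<^esub> b" using subgroup.rcos_module_rev[OF assms(2,1,4,3,5)] .
  then show ?thesis using G.repr_independence[OF _ assms(4,2)] by simp
qed

context tsetting begin

abbreviation "tTu u n \<equiv> tcomp R X (trunc Y (k - int u)) n"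
abbreviation "tW u n \<equiv> (fam (tTu u n))\<lparr>carrier := fsup (tTu u n)\<rparr>"
abbreviation "tSP n \<equiv> fam (\<lambda>u. tW u n)"
abbreviation "tnu u n \<equiv> tincl R X (trunc Y (k - int u)) n"
abbreviation "tE n \<equiv> tincl R X (trunc Y k) n"
abbreviation "tDu u n \<equiv> tdiff R X dX (trunc Y (k - int u)) dY n"

lemma cu: "cxok R X dX (trunc Y m) dY" by (rule cxok_trunc[OF c])

lemma tsys_eq: "tsys R X Y k u n = tW u n" by (simp add: tsys_def tsum_fam)
lemma tsys_nu_eq: "tsys_nu R X Y k u n = tnu u n" by (simp add: tsys_nu_def)
lemma tsys_diff_eq: "tsys_diff R X dX Y dY k u n = tDu u n" by (simp add: tsys_diff_def)
lemma sys_prod_tsys: "sys_prod (tsys R X Y k) n = tSP n" by (simp add: sys_prod_fam tsys_eq)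

lemma cgTu: "comm_group (tTu u n i)" by (rule tcomp_cg[OF cu])
lemma cgFu: "comm_group (fam (tTu u n))" by (rule fam_comm_group[OF cgTu])
lemma gFu: "group (fam (tTu u n))" using cgFu by (simp add: comm_group_def)
lemma fsup_subu: "subgroup (fsup (tTu u n)) (fam (tTu u n))" by (rule fsup_subgroup[OF cgTu])
lemma cgW: "comm_group (tW u n)" by (rule sub_comm_group[OF cgFu fsup_subu])
lemma cgSP: "comm_group (tSP n)" by (rule fam_comm_group[OF cgW])
lemma gSP: "group (tSP n)" using cgSP by (simp add: comm_group_def)
lemma invW: "g \<in> fsup (tTu u n) \<Longrightarrow> inv\<^bsub>tW u n\<^esub> g = (\<lambda>i. inv\<^bsub>tTu u n i\<^esub> (g i))"
  by (rule inv_fsup_gen[OF cu])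
lemma invSP: "x \<in> carrier (tSP n) \<Longrightarrow> inv\<^bsub>tSP n\<^esub> x = (\<lambda>u. inv\<^bsub>tW u n\<^esub> (x u))"
  by (rule fam_inv[OF cgW])

lemma Tu_in: "n - i \<le> k - int u \<Longrightarrow> tTu u n i = tT n i"
  by (rule tcomp_trunc_in)

lemma Tu_triv: "k - int u < n - i \<Longrightarrow> carrier (tTu u n i) = {\<one>\<^bsub>tTu u n i\<^esub>}"
  by (rule tcomp_trunc_triv[OF c])

lemma W_carrier: "g \<in> fsup (tTu u n) \<Longrightarrow> g i \<in> carrier (tTu u n i)"
  by (simp add: fsup_def)

lemma nu_val:
  assumes "g \<in> carrier (fam (tTu (Suc u) n))"
  shows "tnu u n g i = (if n - i \<le> k - int (Suc u) then g i else \<one>\<^bsub>tTu u n i\<^esub>)"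
  by (rule tincl_val[OF c _ assms]) (simp add: of_nat_Suc)

lemma nu_homW: "tnu u n \<in> hom (tW (Suc u) n) (tW u n)"
proof (rule hom_restrict)
  show "tnu u n \<in> hom (fam (tTu (Suc u) n)) (fam (tTu u n))" by (rule tincl_hom[OF c]) simp
  show "fsup (tTu (Suc u) n) \<subseteq> carrier (fam (tTu (Suc u) n))" by (auto simp: fsup_def)
  have le: "k - int (Suc u) \<le> k - int u" by (simp add: of_nat_Suc)
  show "tnu u n ` fsup (tTu (Suc u) n) \<subseteq> fsup (tTu u n)" using tincl_fsup[OF c le] by blast
qed

abbreviation "omn n \<equiv> one_minus_nu (tsys R X Y k) (tsys_nu R X Y k) n"

lemma omn_homSP: "omn n \<in> hom (tSP n) (tSP n)"
proof -
  have "omn n \<in> hom (fam (\<lambda>u. tsys R X Y k u n)) (fam (\<lambda>u. tsys R X Y k u n))"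
  proof (rule omn_hom)
    show "\<And>u. comm_group (tsys R X Y k u n)" by (simp add: tsys_eq cgW)
    show "\<And>u. tsys_nu R X Y k u n \<in> hom (tsys R X Y k (Suc u) n) (tsys R X Y k u n)"
      unfolding tsys_eq tsys_nu_eq by (rule nu_homW)
  qed
  then show ?thesis by (simp add: tsys_eq)
qed

lemma omn_val:
  assumes x: "x \<in> carrier (tSP n)"
  shows "omn n x u i = x u i \<otimes>\<^bsub>tTu u n i\<^esub> inv\<^bsub>tTu u n i\<^esub> (tnu u n (x (Suc u)) i)"
proof -
  have "tnu u n (x (Suc u)) \<in> fsup (tTu u n)" using hom_in_carrier[OF nu_homW, of "x (Suc u)"] x by simp
  then show ?thesis by (simp add: one_minus_nu_def tsys_eq tsys_nu_eq invW)
qed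

definition Im :: "int \<Rightarrow> (nat \<Rightarrow> int \<Rightarrow> ('a, 'b) tens) set" where
  "Im n = omn n ` carrier (tSP n)"

lemma Im_sub: "subgroup (Im n) (tSP n)"
  unfolding Im_def
  by (rule group_hom.img_is_subgroup) (simp add: group_hom_def group_hom_axioms_def gSP omn_homSP)

lemma Im_normal: "Im n \<lhd> tSP n" by (rule comm_group.subgroup_imp_normal[OF cgSP Im_sub])

lemma fsup_normalP: "fsup (tT n) \<lhd> tP n" by (rule comm_group.subgroup_imp_normal[OF cgP fsup_sub])

lemma W_ext:
  assumes g: "g \<in> fsup (tTu u n)" and h: "h \<in> fsup (tTu u n)"
    and e: "\<And>i. n - i \<le> k - int u \<Longrightarrow> g i = h i"
  shows "g = h"
proof
  fix i show "g i = h i"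
  proof (cases "n - i \<le> k - int u")
    case False
    then show ?thesis using Tu_triv[of u n i] W_carrier[OF g, of i] W_carrier[OF h, of i] by simp
  qed (rule e)
qed

definition xf :: "int \<Rightarrow> (int \<Rightarrow> ('a, 'b) tens) \<Rightarrow> nat \<Rightarrow> int \<Rightarrow> ('a, 'b) tens" where
  "xf n f = (\<lambda>u i. if i = n - k + int u then f i else \<one>\<^bsub>tTu u n i\<^esub>)"

lemma oneTu: "\<one>\<^bsub>tTu u n i\<^esub> \<in> carrier (tTu u n i)"
  using cgTu by (simp add: comm_group_def group.is_monoid monoid.one_closed)

lemma xf_in:
  assumes f: "f \<in> carrier (tP n)" shows "xf n f u \<in> fsup (tTu u n)"
proof -
  have "xf n f u i \<in> carrier (tTu u n i)" for i
    using f Tu_in[of n i u] oneTu by (auto simp: xf_def)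
  moreover have "{i. xf n f u i \<noteq> \<one>\<^bsub>tTu u n i\<^esub>} \<subseteq> {n - k + int u}" by (auto simp: xf_def)
  ultimately show ?thesis by (auto simp: fsup_def intro: finite_subset)
qed

lemma xf_hom: "xf n \<in> hom (tP n) (tSP n)"
proof (rule homI)
  fix f assume "f \<in> carrier (tP n)" then show "xf n f \<in> carrier (tSP n)" using xf_in by simp
next
  fix f g assume f: "f \<in> carrier (tP n)" and g: "g \<in> carrier (tP n)"
  have o: "\<one>\<^bsub>tTu u n i\<^esub> \<otimes>\<^bsub>tTu u n i\<^esub> \<one>\<^bsub>tTu u n i\<^esub> = \<one>\<^bsub>tTu u n i\<^esub>" for u i
  proof -
    interpret Ti: comm_group "tTu u n i" by (rule cgTu)
    show ?thesis by simp
  qed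
  have t: "tTu u n (n - k + int u) = tT n (n - k + int u)" for u by (rule Tu_in) simp
  show "xf n (f \<otimes>\<^bsub>tP n\<^esub> g) = xf n f \<otimes>\<^bsub>tSP n\<^esub> xf n g"
    by (intro ext) (simp add: xf_def o t)
qed

lemma xf_fsup: "xf n ` fsup (tT n) \<subseteq> Im n"
proof
  fix y assume "y \<in> xf n ` fsup (tT n)"
  then obtain f where f: "f \<in> fsup (tT n)" "y = xf n f" by blast
  define z where "z u = (\<lambda>i. if n - k + int u \<le> i then f i else \<one>\<^bsub>tTu u n i\<^esub>)" for u
  have zin: "z u \<in> fsup (tTu u n)" for u
  proof -
    have "z u i \<in> carrier (tTu u n i)" for i
      using fsup_carrier[OF f(1), of i] Tu_in[of n i u] oneTu by (auto simp: z_def)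
    moreover have "{i. z u i \<noteq> \<one>\<^bsub>tTu u n i\<^esub>} \<subseteq> {i. f i \<noteq> \<one>\<^bsub>tT n i\<^esub>}"
      using Tu_in[of n _ u] by (auto simp: z_def split: if_splits)
    ultimately show ?thesis using f(1) by (auto simp: fsup_def intro: finite_subset)
  qed
  have zc: "z \<in> carrier (tSP n)" using zin by simp
  have "omn n z = xf n f"
  proof (intro ext)
    fix u i
    interpret Ti: comm_group "tTu u n i" by (rule cgTu)
    have nv: "tnu u n (z (Suc u)) i = (if n - i \<le> k - int (Suc u) then z (Suc u) i else \<one>\<^bsub>tTu u n i\<^esub>)"
      using zin by (intro nu_val) (simp add: fsup_def)
    consider "i < n - k + int u" | "i = n - k + int u" | "n - k + int u < i" by linarith
    then show "omn n z u i = xf n f u i"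
    proof cases
      case 1 then show ?thesis unfolding omn_val[OF zc] nv by (simp add: z_def xf_def)
    next
      case 2
      have fc: "f i \<in> carrier (tTu u n i)" using fsup_carrier[OF f(1), of i] Tu_in[of n i u] 2 by simp
      have xv: "xf n f u i = f i" using 2 by (simp add: xf_def)
      have zv: "z u i = f i" using 2 by (simp add: z_def)
      have n0: "tnu u n (z (Suc u)) i = \<one>\<^bsub>tTu u n i\<^esub>" using 2 nv by (simp add: of_nat_Suc)
      show ?thesis unfolding omn_val[OF zc] xv zv n0 using fc by simp
    next
      case 3
      have t: "tTu (Suc u) n i = tTu u n i" using 3 Tu_in[of n i u] Tu_in[of n i "Suc u"] by simp
      have "f i \<in> carrier (tTu u n i)" using fsup_carrier[OF f(1), of i] Tu_in[of n i u] 3 by simp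
      then show ?thesis using 3 unfolding omn_val[OF zc] nv by (simp add: z_def xf_def t)
    qed
  qed
  then have "xf n f = omn n z" by simp
  then have "xf n f \<in> omn n ` carrier (tSP n)" using zc by (rule image_eqI)
  then show "y \<in> Im n" using f(2) by (simp add: Im_def)
qed

lemma xf_inj:
  assumes f: "f \<in> carrier (tP n)" and im: "xf n f \<in> Im n"
  shows "f \<in> fsup (tT n)"
proof -
  obtain z where zc: "z \<in> carrier (tSP n)" and ez: "omn n z = xf n f" using im by (auto simp: Im_def)
  have zin: "z u \<in> fsup (tTu u n)" for u using zc by simp
  have eq: "z u i \<otimes>\<^bsub>tTu u n i\<^esub> inv\<^bsub>tTu u n i\<^esub> (tnu u n (z (Suc u)) i) = xf n f u i" for u i
    using fun_cong[OF fun_cong[OF ez, of u], of i] omn_val[OF zc] by simp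
  have nv: "tnu u n (z (Suc u)) i = (if n - i \<le> k - int (Suc u) then z (Suc u) i else \<one>\<^bsub>tTu u n i\<^esub>)" for u i
    using zin by (intro nu_val) (simp add: fsup_def)
  have T0: "tTu 0 n = tT n" by (simp add: Y_trunc_k)
  have "f = z 0"
  proof
    fix i
    show "f i = z 0 i"
    proof (cases "i < n - k")
      case True
      then show ?thesis using P_low[OF f True] trivT[of n i] W_carrier[OF zin[of 0], of i] by (simp add: Y_trunc_k)
    next
      case False
      define v where "v = nat (i - (n - k))"
      have iv: "i = n - k + int v" using False by (simp add: v_def)
      have claim: "w \<le> v \<Longrightarrow> z (v - w) i = f i" for w
      proof (induction w)
        case 0
        interpret Ti: comm_group "tTu v n i" by (rule cgTu)
        have zc: "z v i \<in> carrier (tTu v n i)" using W_carrier[OF zin] .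
        have xv: "xf n f v i = f i" using iv by (simp add: xf_def)
        have n0: "tnu v n (z (Suc v)) i = \<one>\<^bsub>tTu v n i\<^esub>" using nv[of v i] iv by (simp add: of_nat_Suc)
        have "z v i \<otimes>\<^bsub>tTu v n i\<^esub> inv\<^bsub>tTu v n i\<^esub> \<one>\<^bsub>tTu v n i\<^esub> = f i" using eq[of v i] unfolding xv n0 .
        then show ?case using zc by simp
      next
        case (Suc w)
        define u where "u = v - Suc w"
        have uv: "Suc u = v - w" "u < v" using Suc.prems by (simp_all add: u_def)
        interpret Ti: comm_group "tTu u n i" by (rule cgTu)
        have t: "tTu (Suc u) n i = tTu u n i" using uv iv Tu_in[of n i u] Tu_in[of n i "Suc u"] by simp
        have c1: "z u i \<in> carrier (tTu u n i)" using W_carrier[OF zin] .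
        have c2: "z (Suc u) i \<in> carrier (tTu u n i)" using W_carrier[OF zin, of "Suc u" i] t by simp
        have "z u i \<otimes>\<^bsub>tTu u n i\<^esub> inv\<^bsub>tTu u n i\<^esub> (z (Suc u) i) = \<one>\<^bsub>tTu u n i\<^esub>"
          using eq[of u i] nv[of u i] iv uv by (simp add: xf_def)
        then have "z u i = z (Suc u) i" using c1 c2 by (simp add: Ti.inv_solve_right')
        then show ?case using Suc uv by (simp add: u_def)
      qed
      show ?thesis using claim[of v] by simp
    qed
  qed
  then show ?thesis using zin[of 0] by (simp add: Y_trunc_k)
qed

lemma xf_surj:
  assumes y: "y \<in> carrier (tSP n)"
  shows "\<exists>f\<in>carrier (tP n). y \<otimes>\<^bsub>tSP n\<^esub> inv\<^bsub>tSP n\<^esub> (xf n f) \<in> Im n"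
proof -
  have yin: "y u \<in> fsup (tTu u n)" for u using y by simp
  have le: "k - int u \<le> k" for u by simp
  have emb: "tE n (y u) \<in> fsup (tT n)" for u using tincl_fsup[OF c le yin[of u]] by (simp add: Y_trunc_k)
  have embv: "tE n (y u) i = (if n - i \<le> k - int u then y u i else \<one>\<^bsub>tT n i\<^esub>)" for u i
    using tincl_val[OF c le[of u], where g="y u" and n=n and i=i] yin[of u] by (simp add: fsup_def Y_trunc_k)
  define acc where "acc = rec_nat \<one>\<^bsub>tS n\<^esub> (\<lambda>u a. a \<otimes>\<^bsub>tS n\<^esub> tE n (y u))"
  have acc0: "acc 0 = \<one>\<^bsub>tS n\<^esub>" and accS: "acc (Suc u) = acc u \<otimes>\<^bsub>tS n\<^esub> tE n (y u)" for u
    by (simp_all add: acc_def)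
  interpret S: comm_group "tS n" by (rule cgS)
  have accin: "acc u \<in> fsup (tT n)" for u
  proof (induction u)
    case 0 then show ?case using S.one_closed by (simp add: acc0)
  next
    case (Suc u) then show ?case using S.m_closed[of "acc u" "tE n (y u)"] emb[of u] by (simp add: accS)
  qed
  have accSv: "acc (Suc u) i = acc u i \<otimes>\<^bsub>tT n i\<^esub> tE n (y u) i" for u i by (simp add: accS)
  define f where "f i = acc (nat (i - (n - k)) + 1) i" for i
  have fc: "f \<in> carrier (tP n)" using accin by (simp add: f_def fsup_carrier)
  define z where "z u = (\<lambda>i. if n - k + int u \<le> i then inv\<^bsub>tT n i\<^esub> (acc u i) else \<one>\<^bsub>tTu u n i\<^esub>)" for u
  have zin: "z u \<in> fsup (tTu u n)" for u
  proof -
    have "z u i \<in> carrier (tTu u n i)" for i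
    proof -
      interpret Ti: comm_group "tT n i" by (rule cgT)
      show ?thesis using fsup_carrier[OF accin, of u i] Tu_in[of n i u] oneTu by (auto simp: z_def)
    qed
    moreover have "{i. z u i \<noteq> \<one>\<^bsub>tTu u n i\<^esub>} \<subseteq> {i. acc u i \<noteq> \<one>\<^bsub>tT n i\<^esub>}"
    proof
      fix i assume i: "i \<in> {i. z u i \<noteq> \<one>\<^bsub>tTu u n i\<^esub>}"
      interpret Ti: comm_group "tT n i" by (rule cgT)
      show "i \<in> {i. acc u i \<noteq> \<one>\<^bsub>tT n i\<^esub>}"
        using i Tu_in[of n i u] fsup_carrier[OF accin, of u i] by (auto simp: z_def split: if_splits)
    qed
    ultimately show ?thesis using accin[of u] by (auto simp: fsup_def intro: finite_subset)
  qed
  have zc: "z \<in> carrier (tSP n)" using zin by simp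
  have nv: "tnu u n (z (Suc u)) i = (if n - i \<le> k - int (Suc u) then z (Suc u) i else \<one>\<^bsub>tTu u n i\<^esub>)" for u i
    using zin by (intro nu_val) (simp add: fsup_def)
  have xfc: "xf n f \<in> carrier (tSP n)" using xf_in[OF fc] by simp
  have "y \<otimes>\<^bsub>tSP n\<^esub> inv\<^bsub>tSP n\<^esub> (xf n f) = omn n z"
  proof (intro ext)
    fix u i
    interpret Tu: comm_group "tTu u n i" by (rule cgTu)
    have lhs: "(y \<otimes>\<^bsub>tSP n\<^esub> inv\<^bsub>tSP n\<^esub> (xf n f)) u i = y u i \<otimes>\<^bsub>tTu u n i\<^esub> inv\<^bsub>tTu u n i\<^esub> (xf n f u i)"
      using xf_in[OF fc] by (simp add: invSP[OF xfc] invW)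
    have yc: "y u i \<in> carrier (tTu u n i)" using W_carrier[OF yin] .
    have xc: "xf n f u i \<in> carrier (tTu u n i)" using W_carrier[OF xf_in[OF fc]] .
    have zc': "z u i \<in> carrier (tTu u n i)" using W_carrier[OF zin] .
    have "tnu u n (z (Suc u)) \<in> carrier (tW u n)" by (rule hom_in_carrier[OF nu_homW]) (use zin in simp)
    then have nc: "tnu u n (z (Suc u)) i \<in> carrier (tTu u n i)" by (simp add: fsup_def)
    consider "i < n - k + int u" | "i = n - k + int u" | "n - k + int u < i" by linarith
    then show "(y \<otimes>\<^bsub>tSP n\<^esub> inv\<^bsub>tSP n\<^esub> (xf n f)) u i = omn n z u i"
    proof cases
      case 1
      have tr: "carrier (tTu u n i) = {\<one>\<^bsub>tTu u n i\<^esub>}" using 1 by (intro Tu_triv) simp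
      show ?thesis unfolding lhs omn_val[OF zc]
        using tr Tu.m_closed[OF yc Tu.inv_closed[OF xc]] Tu.m_closed[OF zc' Tu.inv_closed[OF nc]] by simp
    next
      case 2
      have t: "tTu u n i = tT n i" using 2 by (intro Tu_in) simp
      interpret Ti: comm_group "tT n i" by (rule cgT)
      have a: "acc u i \<in> carrier (tT n i)" using fsup_carrier[OF accin] .
      have yy: "tE n (y u) i = y u i" using 2 embv by simp
      have fi0: "f i = acc (Suc u) i" using 2 by (simp add: f_def)
      have fi: "f i = acc u i \<otimes>\<^bsub>tT n i\<^esub> y u i" unfolding fi0 accSv yy ..
      have yc': "y u i \<in> carrier (tT n i)" using yc t by simp
      have xv: "xf n f u i = f i" using 2 by (simp add: xf_def)
      have zv: "z u i = inv\<^bsub>tT n i\<^esub> (acc u i)" using 2 by (simp add: z_def)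
      have n0: "tnu u n (z (Suc u)) i = \<one>\<^bsub>tTu u n i\<^esub>" using 2 nv by (simp add: of_nat_Suc)
      show ?thesis unfolding lhs omn_val[OF zc] xv zv n0 t fi using a yc'
        by (simp add: Ti.inv_mult Ti.m_lcomm[of "y u i" "inv\<^bsub>tT n i\<^esub> acc u i" "inv\<^bsub>tT n i\<^esub> y u i"])
    next
      case 3
      have t: "tTu u n i = tT n i" using 3 by (intro Tu_in) simp
      have t': "tTu (Suc u) n i = tT n i" using 3 by (intro Tu_in) simp
      interpret Ti: comm_group "tT n i" by (rule cgT)
      have a: "acc u i \<in> carrier (tT n i)" using fsup_carrier[OF accin] .
      have yy: "tE n (y u) i = y u i" using 3 embv by simp
      have yc': "y u i \<in> carrier (tT n i)" using yc t by simp
      have zs: "z (Suc u) i = inv\<^bsub>tT n i\<^esub> (acc u i \<otimes>\<^bsub>tT n i\<^esub> y u i)" using 3 by (simp add: z_def accSv yy)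
      have xv: "xf n f u i = \<one>\<^bsub>tTu u n i\<^esub>" using 3 by (simp add: xf_def)
      have zv: "z u i = inv\<^bsub>tT n i\<^esub> (acc u i)" using 3 by (simp add: z_def)
      have nS: "tnu u n (z (Suc u)) i = inv\<^bsub>tT n i\<^esub> (acc u i \<otimes>\<^bsub>tT n i\<^esub> y u i)"
        using 3 nv[of u i] zs by (simp add: of_nat_Suc)
      have ai: "inv\<^bsub>tT n i\<^esub> (acc u i) \<otimes>\<^bsub>tT n i\<^esub> (acc u i \<otimes>\<^bsub>tT n i\<^esub> y u i) = y u i"
        using a yc' by (simp add: Ti.m_assoc[symmetric])
      show ?thesis unfolding lhs omn_val[OF zc] xv zv nS t using a yc' ai
        by simp
    qed
  qed
  then have "y \<otimes>\<^bsub>tSP n\<^esub> inv\<^bsub>tSP n\<^esub> (xf n f) \<in> omn n ` carrier (tSP n)" using zc by (rule image_eqI)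
  then show ?thesis using fc unfolding Im_def by blast
qed

definition Psi :: "int \<Rightarrow> (int \<Rightarrow> ('a, 'b) tens) set \<Rightarrow> (nat \<Rightarrow> int \<Rightarrow> ('a, 'b) tens) set" where
  "Psi n = (\<lambda>S. Im n #>\<^bsub>tSP n\<^esub> xf n (SOME x. x \<in> S))"

lemma Psi_iso: "Psi n \<in> iso (tP n Mod fsup (tT n)) (tSP n Mod Im n)"
  unfolding Psi_def
  by (rule quot_map_iso[OF gP gSP fsup_sub fsup_normalP Im_normal xf_hom xf_fsup xf_inj xf_surj])

lemma Psi_val: "f \<in> carrier (tP n) \<Longrightarrow> Psi n (fsup (tT n) #>\<^bsub>tP n\<^esub> f) = Im n #>\<^bsub>tSP n\<^esub> xf n f"
  unfolding Psi_def
  by (rule quot_map(2)[OF gP gSP fsup_sub fsup_normalP Im_normal xf_hom xf_fsup])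

end


declare of_nat_Suc [simp del]

lemma tdiff_trunc_in:
  assumes "n - 1 - i \<le> m"
  shows "tdiff R X dX (trunc Y m) dY n g i = tdiff R X dX Y dY n g i"
  using assms by (simp add: tdiff_def tcomp_def)

context tsetting begin

lemma Du_homW: "tDu u n \<in> hom (tW u n) (tW u (n - 1))"
proof (rule hom_restrict[OF tdiff_hom[OF cu]])
  show "fsup (tTu u n) \<subseteq> carrier (fam (tTu u n))" by (auto simp: fsup_def)
  show "tDu u n ` fsup (tTu u n) \<subseteq> fsup (tTu u (n - 1))" using tdiff_fsup[OF cu] by blast
qed

abbreviation "DD n \<equiv> sys_prod_diff (tsys_diff R X dX Y dY k) n"

lemma DD_val: "DD n x u = tDu u n (x u)"
  by (simp add: sys_prod_diff_def tsys_diff_eq)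

lemma DD_hom: "DD n \<in> hom (tSP n) (tSP (n - 1))"
proof (rule homI)
  fix x assume "x \<in> carrier (tSP n)"
  then show "DD n x \<in> carrier (tSP (n - 1))"
    using hom_in_carrier[OF Du_homW] by (simp add: DD_val)
next
  fix x y assume x: "x \<in> carrier (tSP n)" and y: "y \<in> carrier (tSP n)"
  show "DD n (x \<otimes>\<^bsub>tSP n\<^esub> y) = DD n x \<otimes>\<^bsub>tSP (n - 1)\<^esub> DD n y"
  proof (rule ext)
    fix u
    have "tDu u n (x u \<otimes>\<^bsub>tW u n\<^esub> y u) = tDu u n (x u) \<otimes>\<^bsub>tW u (n - 1)\<^esub> tDu u n (y u)"
      by (rule hom_mult[OF Du_homW]) (use x y in simp_all)
    then show "DD n (x \<otimes>\<^bsub>tSP n\<^esub> y) u = (DD n x \<otimes>\<^bsub>tSP (n - 1)\<^esub> DD n y) u"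
      by (simp add: DD_val)
  qed
qed

lemma Du_nu:
  assumes g: "g \<in> fsup (tTu (Suc u) n)"
  shows "tDu u n (tnu u n g) = tnu u (n - 1) (tDu (Suc u) n g)"
proof -
  have l1: "k - int (Suc u) \<le> k - int u" by (simp add: of_nat_Suc)
  have l2: "k - int u \<le> k" by simp
  have l3: "k - int (Suc u) \<le> k" by (simp add: of_nat_Suc)
  have gc: "g \<in> carrier (fam (tTu (Suc u) n))" using g by (simp add: fsup_def)
  have ng: "tnu u n g \<in> carrier (fam (tTu u n))" using hom_in_carrier[OF tincl_hom[OF c l1] gc] .
  have A: "tDu u n (tnu u n g) \<in> carrier (fam (tTu u (n - 1)))"
    using hom_in_carrier[OF tdiff_hom[OF cu] ng] .
  have dg: "tDu (Suc u) n g \<in> carrier (fam (tTu (Suc u) (n - 1)))"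
    using hom_in_carrier[OF tdiff_hom[OF cu] gc] .
  have B: "tnu u (n - 1) (tDu (Suc u) n g) \<in> carrier (fam (tTu u (n - 1)))"
    using hom_in_carrier[OF tincl_hom[OF c l1] dg] .
  have "tE (n - 1) (tDu u n (tnu u n g)) = tdiff R X dX (trunc Y k) dY n (tE n (tnu u n g))"
    by (rule tincl_chain[OF c l2 ng])
  also have "\<dots> = tdiff R X dX (trunc Y k) dY n (tE n g)"
    by (simp add: tincl_tincl[OF c l1 l2 gc])
  also have "\<dots> = tE (n - 1) (tDu (Suc u) n g)"
    by (rule tincl_chain[OF c l3 gc, symmetric])
  also have "\<dots> = tE (n - 1) (tnu u (n - 1) (tDu (Suc u) n g))"
    by (rule tincl_tincl[OF c l1 l2 dg, symmetric])
  finally show ?thesis by (rule tincl_inj[OF c l2 A B])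
qed

lemma DD_Im: "DD n ` Im n \<subseteq> Im (n - 1)"
proof
  fix w assume "w \<in> DD n ` Im n"
  then obtain z where zc: "z \<in> carrier (tSP n)" and w: "w = DD n (omn n z)" by (auto simp: Im_def)
  have zin: "z u \<in> fsup (tTu u n)" for u using zc by simp
  have Dz: "DD n z \<in> carrier (tSP (n - 1))" using hom_in_carrier[OF DD_hom zc] .
  have "DD n (omn n z) = omn (n - 1) (DD n z)"
  proof (rule ext)
    fix u
    interpret Wu: comm_group "tW u n" by (rule cgW)
    interpret Wu1: comm_group "tW u (n - 1)" by (rule cgW)
    interpret gh: group_hom "tW u n" "tW u (n - 1)" "tDu u n"
      using Du_homW by (simp add: group_hom_def group_hom_axioms_def Wu.is_group Wu1.is_group)
    have nc: "tnu u n (z (Suc u)) \<in> carrier (tW u n)" by (rule hom_in_carrier[OF nu_homW]) (use zin in simp)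
    have "DD n (omn n z) u = tDu u n (z u \<otimes>\<^bsub>tW u n\<^esub> inv\<^bsub>tW u n\<^esub> tnu u n (z (Suc u)))"
      by (simp add: DD_val one_minus_nu_def tsys_eq tsys_nu_eq)
    also have "\<dots> = tDu u n (z u) \<otimes>\<^bsub>tW u (n - 1)\<^esub> inv\<^bsub>tW u (n - 1)\<^esub> tDu u n (tnu u n (z (Suc u)))"
    proof -
      have zu: "z u \<in> carrier (tW u n)" using zin by simp
      have e1: "tDu u n (z u \<otimes>\<^bsub>tW u n\<^esub> inv\<^bsub>tW u n\<^esub> tnu u n (z (Suc u)))
          = tDu u n (z u) \<otimes>\<^bsub>tW u (n - 1)\<^esub> tDu u n (inv\<^bsub>tW u n\<^esub> tnu u n (z (Suc u)))"
        by (rule gh.hom_mult[OF zu Wu.inv_closed[OF nc]])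
      have e2: "tDu u n (inv\<^bsub>tW u n\<^esub> tnu u n (z (Suc u))) = inv\<^bsub>tW u (n - 1)\<^esub> tDu u n (tnu u n (z (Suc u)))"
        by (rule gh.hom_inv[OF nc])
      show ?thesis by (simp only: e1 e2)
    qed
    also have "\<dots> = tDu u n (z u) \<otimes>\<^bsub>tW u (n - 1)\<^esub> inv\<^bsub>tW u (n - 1)\<^esub> tnu u (n - 1) (tDu (Suc u) n (z (Suc u)))"
      by (simp add: Du_nu[OF zin])
    also have "\<dots> = omn (n - 1) (DD n z) u"
      by (simp add: DD_val one_minus_nu_def tsys_eq tsys_nu_eq)
    finally show "DD n (omn n z) u = omn (n - 1) (DD n z) u" .
  qed
  then show "w \<in> Im (n - 1)" using w Dz by (auto simp: Im_def)
qed

end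


declare of_nat_Suc [simp del]

lemma sgnm_one: "group G \<Longrightarrow> sgnm G i \<one>\<^bsub>G\<^esub> = \<one>\<^bsub>G\<^esub>"
  by (simp add: sgnm_def monoid.inv_one group.is_monoid)

context tsetting begin

lemma diff_Im:
  assumes f: "f \<in> carrier (tP n)"
  shows "DD n (xf n f) \<otimes>\<^bsub>tSP (n - 1)\<^esub> inv\<^bsub>tSP (n - 1)\<^esub> (xf (n - 1) (tD n f)) \<in> Im (n - 1)"
proof -
  define a where "a j = sgnm (tT (n - 1) j) j (tV R X Y dY n j (f j))" for j
  have ac: "a j \<in> carrier (tT (n - 1) j)" for j
    unfolding a_def
    by (rule hom_in_carrier[OF sgnm_hom[OF cgT] hom_in_carrier[OF tV_hom[OF c]]]) (use f in simp)
  define z where "z u = (\<lambda>i. if i = n - 1 - k + int u then inv\<^bsub>tT (n - 1) i\<^esub> (a i) else \<one>\<^bsub>tTu u (n - 1) i\<^esub>)" for u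
  have zin: "z u \<in> fsup (tTu u (n - 1))" for u
  proof -
    have "z u i \<in> carrier (tTu u (n - 1) i)" for i
    proof (cases "i = n - 1 - k + int u")
      case True
      interpret Ti: comm_group "tT (n - 1) i" by (rule cgT)
      have tt: "tTu u (n - 1) i = tT (n - 1) i" using True by (intro Tu_in) simp
      have zv: "z u i = inv\<^bsub>tT (n - 1) i\<^esub> (a i)" using True by (simp add: z_def)
      show ?thesis unfolding zv tt by (rule Ti.inv_closed[OF ac])
    qed (simp add: z_def oneTu)
    moreover have "{i. z u i \<noteq> \<one>\<^bsub>tTu u (n - 1) i\<^esub>} \<subseteq> {n - 1 - k + int u}" by (auto simp: z_def)
    ultimately show ?thesis by (auto simp: fsup_def intro: finite_subset)
  qed
  have zc: "z \<in> carrier (tSP (n - 1))" using zin by simp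
  have Df: "tD n f \<in> carrier (tP (n - 1))" using hom_in_carrier[OF D_homP f] .
  have x1: "xf n f \<in> carrier (tSP n)" using hom_in_carrier[OF xf_hom f] .
  have Dx1: "DD n (xf n f) \<in> carrier (tSP (n - 1))" using hom_in_carrier[OF DD_hom x1] .
  have x2: "xf (n - 1) (tD n f) \<in> carrier (tSP (n - 1))" using hom_in_carrier[OF xf_hom Df] .
  have nv: "tnu u (n - 1) (z (Suc u)) i = (if n - 1 - i \<le> k - int (Suc u) then z (Suc u) i else \<one>\<^bsub>tTu u (n - 1) i\<^esub>)" for u i
    using zin by (intro nu_val) (simp add: fsup_def)
  have "DD n (xf n f) \<otimes>\<^bsub>tSP (n - 1)\<^esub> inv\<^bsub>tSP (n - 1)\<^esub> (xf (n - 1) (tD n f)) = omn (n - 1) z"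
  proof (intro ext)
    fix u i
    interpret Tu: comm_group "tTu u (n - 1) i" by (rule cgTu)
    have lhs: "(DD n (xf n f) \<otimes>\<^bsub>tSP (n - 1)\<^esub> inv\<^bsub>tSP (n - 1)\<^esub> (xf (n - 1) (tD n f))) u i
        = DD n (xf n f) u i \<otimes>\<^bsub>tTu u (n - 1) i\<^esub> inv\<^bsub>tTu u (n - 1) i\<^esub> (xf (n - 1) (tD n f) u i)"
      using x2 by (simp add: invSP invW)
    have c1: "DD n (xf n f) u i \<in> carrier (tTu u (n - 1) i)" using Dx1 by (simp add: fsup_def)
    have c2: "xf (n - 1) (tD n f) u i \<in> carrier (tTu u (n - 1) i)" using x2 by (simp add: fsup_def)
    have c3: "z u i \<in> carrier (tTu u (n - 1) i)" using W_carrier[OF zin] .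
    have "tnu u (n - 1) (z (Suc u)) \<in> carrier (tW u (n - 1))" by (rule hom_in_carrier[OF nu_homW]) (use zin in simp)
    then have c4: "tnu u (n - 1) (z (Suc u)) i \<in> carrier (tTu u (n - 1) i)" by (simp add: fsup_def)
    show "(DD n (xf n f) \<otimes>\<^bsub>tSP (n - 1)\<^esub> inv\<^bsub>tSP (n - 1)\<^esub> (xf (n - 1) (tD n f))) u i = omn (n - 1) z u i"
    proof (cases "n - 1 - i \<le> k - int u")
      case False
      have tr: "carrier (tTu u (n - 1) i) = {\<one>\<^bsub>tTu u (n - 1) i\<^esub>}" using False by (intro Tu_triv) simp
      show ?thesis unfolding lhs omn_val[OF zc]
        using tr Tu.m_closed[OF c1 Tu.inv_closed[OF c2]] Tu.m_closed[OF c3 Tu.inv_closed[OF c4]] by simp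
    next
      case True
      have t: "tTu u (n - 1) i = tT (n - 1) i" using True by (rule Tu_in)
      interpret Ti: comm_group "tT (n - 1) i" by (rule cgT)
      have U1: "tU R X dX Y n i \<in> hom (tTu u n (i + 1)) (tT (n - 1) i)" by (rule tU_hom_trunc[OF c])
      have V1: "tV R X Y dY n i \<in> hom (tTu u n i) (tT (n - 1) i)" by (rule tV_hom_trunc[OF c])
      have hU: "tU R X dX Y n i (xf n f u (i + 1)) = (if i + 1 = n - k + int u then tU R X dX Y n i (f (i + 1)) else \<one>\<^bsub>tT (n - 1) i\<^esub>)"
        using hom_one_cg[OF U1 cgTu cgT] by (simp add: xf_def)
      have hV: "tV R X Y dY n i (xf n f u i) = (if i = n - k + int u then tV R X Y dY n i (f i) else \<one>\<^bsub>tT (n - 1) i\<^esub>)"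
        using hom_one_cg[OF V1 cgTu cgT] by (simp add: xf_def)
      have DDv: "DD n (xf n f) u i = tU R X dX Y n i (xf n f u (i + 1)) \<otimes>\<^bsub>tT (n - 1) i\<^esub>
           sgnm (tT (n - 1) i) i (tV R X Y dY n i (xf n f u i))"
        unfolding DD_val tdiff_trunc_in[OF True] by (rule tdiff_eq)
      have Dfv: "tD n f i = tU R X dX Y n i (f (i + 1)) \<otimes>\<^bsub>tT (n - 1) i\<^esub> a i"
        by (simp add: tdiff_eq a_def)
      have Uc: "tU R X dX Y n i (f (i + 1)) \<in> carrier (tT (n - 1) i)"
        by (rule hom_in_carrier[OF tU_hom[OF c]]) (use f in simp)
      have s1: "sgnm (tT (n - 1) i) i \<one>\<^bsub>tT (n - 1) i\<^esub> = \<one>\<^bsub>tT (n - 1) i\<^esub>" by (rule sgnm_one[OF Ti.is_group])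
      consider "i + 1 = n - k + int u" | "i = n - k + int u" | "n - k + int u < i" using True by linarith
      then show ?thesis
      proof cases
        case 1
        have e1: "DD n (xf n f) u i = tU R X dX Y n i (f (i + 1)) \<otimes>\<^bsub>tT (n - 1) i\<^esub> \<one>\<^bsub>tT (n - 1) i\<^esub>"
          unfolding DDv hU hV using 1 by (simp add: s1)
        have e2: "xf (n - 1) (tD n f) u i = tU R X dX Y n i (f (i + 1)) \<otimes>\<^bsub>tT (n - 1) i\<^esub> a i"
          using 1 by (simp add: xf_def Dfv)
        have e3: "z u i = inv\<^bsub>tT (n - 1) i\<^esub> (a i)" using 1 by (simp add: z_def)
        have e4: "tnu u (n - 1) (z (Suc u)) i = \<one>\<^bsub>tT (n - 1) i\<^esub>" using 1 nv[of u i] t by (simp add: of_nat_Suc)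
        show ?thesis unfolding lhs omn_val[OF zc] e1 e2 e3 e4 t using Uc ac[of i]
          by (simp add: Ti.inv_mult Ti.m_assoc[symmetric])
      next
        case 2
        have e1: "DD n (xf n f) u i = \<one>\<^bsub>tT (n - 1) i\<^esub> \<otimes>\<^bsub>tT (n - 1) i\<^esub> a i"
          unfolding DDv hU hV using 2 by (simp add: a_def)
        have e2: "xf (n - 1) (tD n f) u i = \<one>\<^bsub>tT (n - 1) i\<^esub>" using 2 t by (simp add: xf_def)
        have e3: "z u i = \<one>\<^bsub>tT (n - 1) i\<^esub>" using 2 t by (simp add: z_def)
        have e4: "tnu u (n - 1) (z (Suc u)) i = inv\<^bsub>tT (n - 1) i\<^esub> (a i)" using 2 nv[of u i] by (simp add: of_nat_Suc z_def)
        show ?thesis unfolding lhs omn_val[OF zc] e1 e2 e3 e4 t using ac[of i] by simp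
      next
        case 3
        have e1: "DD n (xf n f) u i = \<one>\<^bsub>tT (n - 1) i\<^esub> \<otimes>\<^bsub>tT (n - 1) i\<^esub> \<one>\<^bsub>tT (n - 1) i\<^esub>"
          unfolding DDv hU hV using 3 by (simp add: s1)
        have e2: "xf (n - 1) (tD n f) u i = \<one>\<^bsub>tT (n - 1) i\<^esub>" using 3 t by (simp add: xf_def)
        have e3: "z u i = \<one>\<^bsub>tT (n - 1) i\<^esub>" using 3 t by (simp add: z_def)
        have tS: "tTu (Suc u) (n - 1) i = tT (n - 1) i" using 3 by (intro Tu_in) (simp add: of_nat_Suc)
        have e4: "tnu u (n - 1) (z (Suc u)) i = \<one>\<^bsub>tT (n - 1) i\<^esub>" using 3 nv[of u i] tS by (simp add: of_nat_Suc z_def)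
        show ?thesis unfolding lhs omn_val[OF zc] e1 e2 e3 e4 t by simp
      qed
    qed
  qed
  then show ?thesis using zc by (auto simp: Im_def)
qed

lemma Dfsup: "tD n ` fsup (tT n) \<subseteq> fsup (tT (n - 1))" using tdiff_fsup[OF c] by blast

lemma Psi_comm:
  assumes x: "x \<in> carrier (tP n Mod fsup (tT n))"
  shows "Psi (n - 1) (quot_diff (tprod R X Y) (tdiff R X dX Y dY) (tsum_carrier R X Y) n x)
       = lim1_diff (tsys R X Y k) (tsys_nu R X Y k) (tsys_diff R X dX Y dY k) n (Psi n x)"
proof -
  obtain f where fc: "f \<in> carrier (tP n)" and xf: "x = fsup (tT n) #>\<^bsub>tP n\<^esub> f"
    using x by (auto simp: carrier_FactGroup)
  have Df: "tD n f \<in> carrier (tP (n - 1))" using hom_in_carrier[OF D_homP fc] .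
  have x1: "xf n f \<in> carrier (tSP n)" using hom_in_carrier[OF xf_hom fc] .
  have "quot_diff (tprod R X Y) (tdiff R X dX Y dY) (tsum_carrier R X Y) n x
      = fsup (tT (n - 1)) #>\<^bsub>tP (n - 1)\<^esub> tD n (SOME y. y \<in> fsup (tT n) #>\<^bsub>tP n\<^esub> f)"
    by (simp add: quot_diff_def tprod_eq tsum_carrier_fsup xf)
  also have "\<dots> = fsup (tT (n - 1)) #>\<^bsub>tP (n - 1)\<^esub> tD n f"
    by (rule quot_map(2)[OF gP gP fsup_sub fsup_normalP fsup_normalP D_homP Dfsup fc])
  finally have l1: "Psi (n - 1) (quot_diff (tprod R X Y) (tdiff R X dX Y dY) (tsum_carrier R X Y) n x)
      = Im (n - 1) #>\<^bsub>tSP (n - 1)\<^esub> xf (n - 1) (tD n f)"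
    by (simp add: Psi_val[OF Df])
  have "lim1_diff (tsys R X Y k) (tsys_nu R X Y k) (tsys_diff R X dX Y dY k) n (Psi n x)
      = Im (n - 1) #>\<^bsub>tSP (n - 1)\<^esub> DD n (SOME y. y \<in> Im n #>\<^bsub>tSP n\<^esub> xf n f)"
    by (simp add: lim1_diff_def quot_diff_def sys_prod_tsys Im_def xf Psi_val[OF fc])
  also have "\<dots> = Im (n - 1) #>\<^bsub>tSP (n - 1)\<^esub> DD n (xf n f)"
    by (rule quot_map(2)[OF gSP gSP Im_sub Im_normal Im_normal DD_hom DD_Im x1])
  also have "\<dots> = Im (n - 1) #>\<^bsub>tSP (n - 1)\<^esub> xf (n - 1) (tD n f)"
    by (rule coset_eq_by_diff[OF gSP Im_sub hom_in_carrier[OF DD_hom x1] hom_in_carrier[OF xf_hom Df] diff_Im[OF fc]])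
  finally show ?thesis using l1 by simp
qed

theorem part2: "cx_iso (quot_grp (tprod R X Y) (tsum_carrier R X Y))
           (quot_diff (tprod R X Y) (tdiff R X dX Y dY) (tsum_carrier R X Y))
           (lim1_grp (tsys R X Y k) (tsys_nu R X Y k))
           (lim1_diff (tsys R X Y k) (tsys_nu R X Y k) (tsys_diff R X dX Y dY k))"
proof -
  have g1: "quot_grp (tprod R X Y) (tsum_carrier R X Y) n = tP n Mod fsup (tT n)" for n
    by (simp add: quot_grp_def tprod_eq tsum_carrier_fsup)
  have g2: "lim1_grp (tsys R X Y k) (tsys_nu R X Y k) n = tSP n Mod Im n" for n
    by (simp add: lim1_grp_def quot_grp_def sys_prod_tsys Im_def)
  show ?thesis unfolding cx_iso_def g1 g2
    by (rule exI[of _ Psi]) (use Psi_iso Psi_comm in simp)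
qed

end

theorem theorem3p5:
  fixes R :: "'r ring"
    and X :: "int \<Rightarrow> ('r, 'a) module" and dX :: "int \<Rightarrow> 'a \<Rightarrow> 'a"
    and Y :: "int \<Rightarrow> ('r, 'b) module" and dY :: "int \<Rightarrow> 'b \<Rightarrow> 'b"
    and k :: int
  assumes "ring R"
    and "is_complex (opp_ring R) X dX"
    and "is_complex R Y dY"
    and "bdd_above_with_sup Y k"
  shows "cx_iso (tprod R X Y) (tdiff R X dX Y dY)
           (lim_grp (qsys R X Y k) (qsys_nu R X Y k))
           (sys_prod_diff (qsys_diff R X dX Y dY k))
       \<and> cx_iso (quot_grp (tprod R X Y) (tsum_carrier R X Y))
           (quot_diff (tprod R X Y) (tdiff R X dX Y dY) (tsum_carrier R X Y))
           (lim1_grp (tsys R X Y k) (tsys_nu R X Y k))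
           (lim1_diff (tsys R X Y k) (tsys_nu R X Y k) (tsys_diff R X dX Y dY k))"
proof -
  interpret tsetting R X dX Y dY k
    by unfold_locales (use assms in \<open>auto intro: cxok_intro zeroabove_intro\<close>)
  show ?thesis using part1 part2 by blast
qed


end
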